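(* Let $U\subset\mathbb S^2$ be open, let $(F^{ij})$ be a symmetric $2$-tensor field in $C^1(U)$ satisfying $\lambda|\xi|^2\le F^{ij}\xi_i\xi_j\le\Lambda|\xi|^2$ on $U$ for constants $\Lambda\ge\lambda>0$, and let $u\in C^3(U)$ satisfy $F^{ij}(u_{ij}+u\delta_{ij})=0$ in $U$. Then there are constants $C_1,C_2$ depending only on the $C^1$-norm of $F^{ij}$ (and on $\lambda,\Lambda$) such that, for every unit vector $E\in\mathbb R^3$, $$F^{ij}(\rho_u)_{ij}\ge-C_1|\nabla\rho_u|,\qquad F^{ij}(\phi_E)_{ij}\ge-C_2|\nabla\phi_E|\quad\text{in }U.$$
   Context: For $u\in C^1(\mathbb S^2)$ and a local orthonormal frame $e_1,e_2$ on $\mathbb S^2$, define the vector field $X_u(x)=\sum_{i=1}^2u_i(x)e_i+u(x)\,x\in\mathbb R^3$ (here $x$ is the position vector, i.e. the unit normal of $\mathbb S^2$ at $x$). For a unit vector $E\in\mathbb R^3$ set $\phi_E(x)=\langle E,X_u(x)\rangle$ and $\rho_u(x)=|X_u(x)|^2$, with $\langle\cdot,\cdot\rangle$ the Euclidean inner product. Subscripts denote covariant derivatives on $\mathbb S^2$. *)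

theory Defs
  imports "HOL-Analysis.Analysis"
begin

text \<open>Functions on the unit sphere S^2 are represented as functions real^3 => real whose
values matter only on the sphere. They are extended 0-homogeneously to the punctured space;
ambient derivatives of this extension, taken at points of the sphere, give the tangential
gradient and (on tangent vectors) the covariant Hessian of the sphere.\<close>

definition sph_ext :: "(real^3 \<Rightarrow> real) \<Rightarrow> real^3 \<Rightarrow> real" where
  "sph_ext f y = f ((1 / norm y) *\<^sub>R y)"

definition pderiv3 :: "(real^3 \<Rightarrow> real) \<Rightarrow> 3 \<Rightarrow> real^3 \<Rightarrow> real" where
  "pderiv3 f i y = frechet_derivative f (at y) (axis i 1)"

definition grad3 :: "(real^3 \<Rightarrow> real) \<Rightarrow> real^3 \<Rightarrow> real^3" where
  "grad3 f y = (\<chi> i. pderiv3 f i y)"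

definition hess3 :: "(real^3 \<Rightarrow> real) \<Rightarrow> real^3 \<Rightarrow> real^3^3" where
  "hess3 f y = (\<chi> i j. pderiv3 (pderiv3 f j) i y)"

definition sgrad :: "(real^3 \<Rightarrow> real) \<Rightarrow> real^3 \<Rightarrow> real^3" where
  "sgrad f x = grad3 (sph_ext f) x"

definition shess :: "(real^3 \<Rightarrow> real) \<Rightarrow> real^3 \<Rightarrow> real^3^3" where
  "shess f x = hess3 (sph_ext f) x"

fun Ck_on :: "nat \<Rightarrow> (real^3 \<Rightarrow> real) \<Rightarrow> (real^3) set \<Rightarrow> bool" where
  "Ck_on 0 f S = continuous_on S f"
| "Ck_on (Suc k) f S = (f differentiable_on S \<and> (\<forall>i. Ck_on k (pderiv3 f i) S))"

definition cone3 :: "(real^3) set \<Rightarrow> (real^3) set" where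
  "cone3 U = {y. y \<noteq> 0 \<and> (1 / norm y) *\<^sub>R y \<in> U}"

definition sph_Ck :: "nat \<Rightarrow> (real^3 \<Rightarrow> real) \<Rightarrow> (real^3) set \<Rightarrow> bool" where
  "sph_Ck k f U = Ck_on k (sph_ext f) (cone3 U)"

definition Xu :: "(real^3 \<Rightarrow> real) \<Rightarrow> real^3 \<Rightarrow> real^3" where
  "Xu u x = sgrad u x + u x *\<^sub>R x"

definition rho_u :: "(real^3 \<Rightarrow> real) \<Rightarrow> real^3 \<Rightarrow> real" where
  "rho_u u x = (norm (Xu u x))\<^sup>2"

definition phi_E :: "real^3 \<Rightarrow> (real^3 \<Rightarrow> real) \<Rightarrow> real^3 \<Rightarrow> real" where
  "phi_E E u x = E \<bullet> Xu u x"

text \<open>F^{ij} f_{ij} for a tangential symmetric 2-tensor A (A x x = 0), as a trace.\<close>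
definition Fop :: "(real^3 \<Rightarrow> real^3^3) \<Rightarrow> (real^3 \<Rightarrow> real) \<Rightarrow> real^3 \<Rightarrow> real" where
  "Fop A f x = trace (A x ** shess f x)"

end

theory Submission
  imports Defs
begin


lemma pd_at: "(f has_derivative f') (at y) \<Longrightarrow> pderiv3 f i y = f' (axis i 1)"
  unfolding pderiv3_def by (metis frechet_derivative_at)

lemma pd_local:
  assumes "open S" "y \<in> S" "\<And>z. z \<in> S \<Longrightarrow> f z = h z"
  shows "pderiv3 f i y = pderiv3 h i y"
proof -
  have "\<And>f'. (f has_derivative f') (at y) \<longleftrightarrow> (h has_derivative f') (at y)"
  proof
    fix f' assume "(f has_derivative f') (at y)"
    then show "(h has_derivative f') (at y)"
      by (rule has_derivative_transform_within_open[OF _ assms(1,2)]) (simp add: assms(3))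
  next
    fix f' assume "(h has_derivative f') (at y)"
    then show "(f has_derivative f') (at y)"
      by (rule has_derivative_transform_within_open[OF _ assms(1,2)]) (simp add: assms(3))
  qed
  then show ?thesis unfolding pderiv3_def frechet_derivative_def by simp
qed

lemma pd_local_fun:
  assumes "open S" "\<And>z. z \<in> S \<Longrightarrow> f z = h z"
  shows "\<And>z. z \<in> S \<Longrightarrow> pderiv3 f i z = pderiv3 h i z"
  using pd_local assms by blast

lemma diff_at_of_on: "f differentiable_on S \<Longrightarrow> open S \<Longrightarrow> y \<in> S \<Longrightarrow> f differentiable at y"
  using differentiable_on_eq_differentiable_at by blast

lemma pd_deriv: "f differentiable at y \<Longrightarrow> (f has_derivative frechet_derivative f (at y)) (at y)"
  using frechet_derivative_works by blast

lemma pd_mult: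
  assumes "f differentiable at y" "h differentiable at y"
  shows "pderiv3 (\<lambda>z. f z * h z) i y = pderiv3 f i y * h y + f y * pderiv3 h i y"
proof -
  have "((\<lambda>z. f z * h z) has_derivative
     (\<lambda>d. f y * frechet_derivative h (at y) d + frechet_derivative f (at y) d * h y)) (at y)"
    using has_derivative_mult[OF pd_deriv[OF assms(1)] pd_deriv[OF assms(2)]] .
  then have "pderiv3 (\<lambda>z. f z * h z) i y = f y * frechet_derivative h (at y) (axis i 1) + frechet_derivative f (at y) (axis i 1) * h y"
    by (rule pd_at)
  then show ?thesis unfolding pderiv3_def by simp
qed

lemma pd_add:
  assumes "f differentiable at y" "h differentiable at y"
  shows "pderiv3 (\<lambda>z. f z + h z) i y = pderiv3 f i y + pderiv3 h i y"
proof -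
  have "((\<lambda>z. f z + h z) has_derivative
     (\<lambda>d. frechet_derivative f (at y) d + frechet_derivative h (at y) d)) (at y)"
    using has_derivative_add[OF pd_deriv[OF assms(1)] pd_deriv[OF assms(2)]] .
  then have "pderiv3 (\<lambda>z. f z + h z) i y = frechet_derivative f (at y) (axis i 1) + frechet_derivative h (at y) (axis i 1)"
    by (rule pd_at)
  then show ?thesis unfolding pderiv3_def by simp
qed

lemma pd_sum:
  assumes "\<And>k. f k differentiable at y"
  shows "pderiv3 (\<lambda>z. \<Sum>k\<in>(UNIV::'a::finite set). f k z) i y = (\<Sum>k\<in>UNIV. pderiv3 (f k) i y)"
proof -
  have "((\<lambda>z. \<Sum>k\<in>(UNIV::'a set). f k z) has_derivative
     (\<lambda>d. \<Sum>k\<in>UNIV. frechet_derivative (f k) (at y) d)) (at y)"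
    by (rule has_derivative_sum) (use pd_deriv[OF assms] in auto)
  then have "pderiv3 (\<lambda>z. \<Sum>k\<in>(UNIV::'a set). f k z) i y = (\<Sum>k\<in>UNIV. frechet_derivative (f k) (at y) (axis i 1))"
    by (rule pd_at)
  then show ?thesis unfolding pderiv3_def by simp
qed

lemma pd_const: "pderiv3 (\<lambda>z. c) i y = 0"
  using pd_at[OF has_derivative_const] by simp

lemma pd_cmult:
  assumes "f differentiable at y"
  shows "pderiv3 (\<lambda>z. c * f z) i y = c * pderiv3 f i y"
  using pd_mult[of "\<lambda>z. c" y f i] assms by (simp add: pd_const)

lemma pd_coord: "pderiv3 (\<lambda>z::real^3. z $ j) i y = (if i = j then 1 else 0)"
proof -
  have "((\<lambda>z::real^3. z $ j) has_derivative (\<lambda>z. z $ j)) (at y)"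
    by (rule bounded_linear_imp_has_derivative) (simp add: bounded_linear_vec_nth)
  then show ?thesis using pd_at by (fastforce simp: axis_def)
qed

lemma pd_norm:
  assumes "y \<noteq> 0"
  shows "pderiv3 (\<lambda>z::real^3. norm z) i y = y $ i * (1 / norm y)"
proof -
  have "((\<lambda>z::real^3. norm z) has_derivative (\<lambda>d. d \<bullet> sgn y)) (at y)"
    using has_derivative_norm[OF assms] .
  then have "pderiv3 (\<lambda>z::real^3. norm z) i y = axis i 1 \<bullet> sgn y" using pd_at by fastforce
  also have "\<dots> = y $ i * (1 / norm y)"
    by (simp add: sgn_div_norm inner_axis' divide_inverse)
  finally show ?thesis .
qed

lemma diff_norm: "y \<noteq> 0 \<Longrightarrow> (\<lambda>z::real^3. norm z) differentiable at y"
  using has_derivative_norm differentiableI by blast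

lemma diff_invnorm: "y \<noteq> 0 \<Longrightarrow> (\<lambda>z::real^3. 1 / norm z) differentiable at y"
proof -
  assume y: "y \<noteq> 0"
  have "(\<lambda>z::real^3. norm z) differentiable at y" using y by (rule diff_norm)
  then show ?thesis using y by (intro differentiable_divide) auto
qed

lemma pd_invnorm:
  assumes "y \<noteq> 0"
  shows "pderiv3 (\<lambda>z::real^3. 1 / norm z) i y = - y $ i * ((1 / norm y) * (1 / norm y) * (1 / norm y))"
proof -
  have "((\<lambda>z::real^3. 1 / norm z) has_derivative
     (\<lambda>h. - 1 * (inverse (norm y) * (h \<bullet> sgn y) * inverse (norm y)) + 0 / norm y)) (at y)"
    by (rule has_derivative_divide[OF has_derivative_const has_derivative_norm[OF assms]]) (use assms in simp)
  then have "pderiv3 (\<lambda>z::real^3. 1 / norm z) i y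
     = - 1 * (inverse (norm y) * (axis i 1 \<bullet> sgn y) * inverse (norm y)) + 0 / norm y"
    using pd_at by fastforce
  also have "\<dots> = - y $ i * ((1 / norm y) * (1 / norm y) * (1 / norm y))"
    by (simp add: sgn_div_norm inner_axis' divide_inverse)
  finally show ?thesis .
qed



lemma diff_local:
  assumes "open S" "y \<in> S" "\<And>z. z \<in> S \<Longrightarrow> f z = h z" "f differentiable at y"
  shows "h differentiable at y"
proof -
  obtain f' where "(f has_derivative f') (at y)" using assms(4) unfolding differentiable_def by blast
  then have "(h has_derivative f') (at y)"
    by (rule has_derivative_transform_within_open[OF _ assms(1,2)]) (simp add: assms(3))
  then show ?thesis unfolding differentiable_def by blast
qed

lemma diffon_local:
  assumes "open S" "\<And>z. z \<in> S \<Longrightarrow> f z = h z"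
  shows "f differentiable_on S \<longleftrightarrow> h differentiable_on S"
proof -
  have a2: "\<And>z. z \<in> S \<Longrightarrow> h z = f z" using assms(2) by metis
  have i1: "\<And>y. y \<in> S \<Longrightarrow> f differentiable at y \<Longrightarrow> h differentiable at y"
    by (rule diff_local[OF assms(1) _ assms(2)])
  have i2: "\<And>y. y \<in> S \<Longrightarrow> h differentiable at y \<Longrightarrow> f differentiable at y"
    by (rule diff_local[OF assms(1) _ a2])
  show ?thesis unfolding differentiable_on_eq_differentiable_at[OF assms(1)] using i1 i2 by auto
qed

lemma Ck_cong:
  assumes "open S" "\<And>z. z \<in> S \<Longrightarrow> f z = h z"
  shows "Ck_on k f S = Ck_on k h S"
  using assms(2)
proof (induction k arbitrary: f h)
  case 0
  then show ?case using continuous_on_cong by auto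
next
  case (Suc k)
  have d: "f differentiable_on S \<longleftrightarrow> h differentiable_on S"
    using diffon_local[OF assms(1)] Suc.prems by blast
  have "\<And>i. Ck_on k (pderiv3 f i) S = Ck_on k (pderiv3 h i) S"
    by (rule Suc.IH) (use pd_local[OF assms(1)] Suc.prems in blast)
  then show ?case using d by simp
qed

lemma Ck_mono: "Ck_on (Suc k) f S \<Longrightarrow> Ck_on k f S"
proof (induction k arbitrary: f)
  case 0
  then show ?case by (simp add: differentiable_imp_continuous_on)
next
  case (Suc k)
  then show ?case by simp
qed

lemma Ck_mono_le: "Ck_on k f S \<Longrightarrow> m \<le> k \<Longrightarrow> Ck_on m f S"
proof (induction k)
  case 0 then show ?case by simp
next
  case (Suc k) then show ?case using Ck_mono le_Suc_eq by blast
qed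

lemma Ck_diff: "Ck_on (Suc k) f S \<Longrightarrow> open S \<Longrightarrow> y \<in> S \<Longrightarrow> f differentiable at y"
  using diff_at_of_on by auto

lemma Ck_const: "Ck_on k (\<lambda>z::real^3. c) S"
proof (induction k arbitrary: c)
  case 0 then show ?case by simp
next
  case (Suc k)
  have "\<And>i. pderiv3 (\<lambda>z::real^3. c) i = (\<lambda>z. 0)" by (rule ext, rule pd_const)
  then show ?case using Suc by simp
qed

lemma Ck_add:
  assumes "open S"
  shows "Ck_on k f S \<Longrightarrow> Ck_on k h S \<Longrightarrow> Ck_on k (\<lambda>z. f z + h z) S"
proof (induction k arbitrary: f h)
  case 0 then show ?case by (simp add: continuous_on_add)
next
  case (Suc k)
  have fd: "f differentiable_on S" and hd: "h differentiable_on S"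
    and fi: "\<And>i. Ck_on k (pderiv3 f i) S" and hi: "\<And>i. Ck_on k (pderiv3 h i) S"
    using Suc.prems by simp_all
  have "Ck_on k (pderiv3 (\<lambda>z. f z + h z) i) S" for i
  proof -
    have c: "Ck_on k (\<lambda>z. pderiv3 f i z + pderiv3 h i z) S" by (rule Suc.IH[OF fi hi])
    have eq: "\<And>z. z \<in> S \<Longrightarrow> pderiv3 (\<lambda>z. f z + h z) i z = pderiv3 f i z + pderiv3 h i z"
      by (rule pd_add; rule diff_at_of_on[OF _ assms], use fd hd in auto)
    show ?thesis using Ck_cong[OF assms eq] c by simp
  qed
  moreover have "(\<lambda>z. f z + h z) differentiable_on S" using fd hd by (rule differentiable_on_add)
  ultimately show ?case by simp
qed

lemma Ck_mult:
  assumes "open S"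
  shows "Ck_on k f S \<Longrightarrow> Ck_on k h S \<Longrightarrow> Ck_on k (\<lambda>z. f z * h z) S"
proof (induction k arbitrary: f h)
  case 0 then show ?case by (simp add: continuous_on_mult)
next
  case (Suc k)
  have fd: "f differentiable_on S" and hd: "h differentiable_on S"
    and fi: "\<And>i. Ck_on k (pderiv3 f i) S" and hi: "\<And>i. Ck_on k (pderiv3 h i) S"
    using Suc.prems by simp_all
  have fk: "Ck_on k f S" and hk: "Ck_on k h S" using Suc.prems Ck_mono by blast+
  have "Ck_on k (pderiv3 (\<lambda>z. f z * h z) i) S" for i
  proof -
    have c: "Ck_on k (\<lambda>z. pderiv3 f i z * h z + f z * pderiv3 h i z) S"
      by (rule Ck_add[OF assms Suc.IH[OF fi hk] Suc.IH[OF fk hi]])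
    have eq: "\<And>z. z \<in> S \<Longrightarrow> pderiv3 (\<lambda>z. f z * h z) i z = pderiv3 f i z * h z + f z * pderiv3 h i z"
      by (rule pd_mult; rule diff_at_of_on[OF _ assms], use fd hd in auto)
    show ?thesis using Ck_cong[OF assms eq] c by simp
  qed
  moreover have "(\<lambda>z. f z * h z) differentiable_on S" using fd hd by (rule differentiable_on_mult)
  ultimately show ?case by simp
qed

lemma Ck_coord: "Ck_on k (\<lambda>z::real^3. z $ j) S"
proof (cases k)
  case 0 then show ?thesis by (simp add: continuous_on_component)
next
  case (Suc m)
  have "(\<lambda>z::real^3. z $ j) differentiable_on S"
    by (simp add: bounded_linear_imp_differentiable_on bounded_linear_vec_nth)
  moreover have "\<And>i. pderiv3 (\<lambda>z::real^3. z $ j) i = (\<lambda>z. if i = j then 1 else 0)"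
    by (rule ext, rule pd_coord)
  ultimately show ?thesis using Suc Ck_const by simp
qed

lemma Ck_norm:
  assumes "open S" "0 \<notin> S"
  shows "Ck_on k (\<lambda>z::real^3. norm z) S \<and> Ck_on k (\<lambda>z::real^3. 1 / norm z) S"
proof (induction k)
  case 0
  have "continuous_on S (\<lambda>z::real^3. 1 / norm z)"
    using assms(2) by (intro continuous_intros) auto
  then show ?case by (simp add: continuous_on_norm_id)
next
  case (Suc k)
  have n1: "Ck_on k (\<lambda>z::real^3. norm z) S" and n2: "Ck_on k (\<lambda>z::real^3. 1 / norm z) S"
    using Suc by simp_all
  have nz: "\<And>z. z \<in> S \<Longrightarrow> z \<noteq> 0" using assms by blast
  have d1: "(\<lambda>z::real^3. norm z) differentiable_on S"
    by (rule differentiable_at_imp_differentiable_on, rule diff_norm, erule nz)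
  have d2: "(\<lambda>z::real^3. 1 / norm z) differentiable_on S"
    by (rule differentiable_at_imp_differentiable_on, rule diff_invnorm, erule nz)
  have c1: "Ck_on k (pderiv3 (\<lambda>z::real^3. norm z) i) S" for i
  proof -
    have c: "Ck_on k (\<lambda>z::real^3. z $ i * (1 / norm z)) S"
      by (rule Ck_mult[OF assms(1) Ck_coord n2])
    have eq: "\<And>z. z \<in> S \<Longrightarrow> pderiv3 (\<lambda>z::real^3. norm z) i z = z $ i * (1 / norm z)"
      by (rule pd_norm, erule nz)
    show ?thesis using Ck_cong[OF assms(1) eq] c by simp
  qed
  have c2: "Ck_on k (pderiv3 (\<lambda>z::real^3. 1 / norm z) i) S" for i
  proof -
    have a: "Ck_on k (\<lambda>z::real^3. - 1 * z $ i) S"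
      by (rule Ck_mult[OF assms(1) Ck_const Ck_coord])
    have c: "Ck_on k (\<lambda>z::real^3. - 1 * z $ i * ((1 / norm z) * (1 / norm z) * (1 / norm z))) S"
      by (rule Ck_mult[OF assms(1) a Ck_mult[OF assms(1) Ck_mult[OF assms(1) n2 n2] n2]])
    have eq: "\<And>z. z \<in> S \<Longrightarrow> pderiv3 (\<lambda>z::real^3. 1 / norm z) i z = - 1 * z $ i * ((1 / norm z) * (1 / norm z) * (1 / norm z))"
      using pd_invnorm nz by simp
    show ?thesis using Ck_cong[OF assms(1) eq] c by simp
  qed
  show ?case using d1 d2 c1 c2 by simp
qed



lemma line_pd:
  fixes g :: "real^3 \<Rightarrow> real"
  assumes "g differentiable at (z + s *\<^sub>R axis k 1)"
  shows "((\<lambda>t. g (z + t *\<^sub>R axis k 1)) has_derivative (\<lambda>d. d * pderiv3 g k (z + s *\<^sub>R axis k 1))) (at s)"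
proof -
  let ?F = "frechet_derivative g (at (z + s *\<^sub>R axis k 1))"
  have l: "((\<lambda>t. z + t *\<^sub>R axis k (1::real)) has_derivative (\<lambda>d. d *\<^sub>R axis k 1)) (at s)"
    by (auto intro!: derivative_eq_intros)
  have g: "(g has_derivative ?F) (at (z + s *\<^sub>R axis k 1))" by (rule pd_deriv[OF assms])
  have c: "((\<lambda>t. g (z + t *\<^sub>R axis k 1)) has_derivative (\<lambda>d. ?F (d *\<^sub>R axis k 1))) (at s)"
    using has_derivative_compose[OF l g] by (simp add: o_def)
  have bl: "bounded_linear ?F" using g by (rule has_derivative_bounded_linear)
  have "\<And>d. ?F (d *\<^sub>R axis k 1) = d * pderiv3 g k (z + s *\<^sub>R axis k 1)"
    unfolding pderiv3_def using linear_cmul[OF bounded_linear.linear[OF bl]] by simp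
  then show ?thesis using c by simp
qed

lemma two_mvt:
  fixes f :: "real^3 \<Rightarrow> real"
  assumes S: "open S" and h: "0 < h"
    and mem: "\<And>s t. 0 \<le> s \<Longrightarrow> s \<le> h \<Longrightarrow> 0 \<le> t \<Longrightarrow> t \<le> h \<Longrightarrow> y + s *\<^sub>R axis i 1 + t *\<^sub>R axis j 1 \<in> S"
    and fd: "f differentiable_on S" and fid: "pderiv3 f i differentiable_on S"
  shows "\<exists>s t. 0 < s \<and> s < h \<and> 0 < t \<and> t < h \<and>
    f (y + h *\<^sub>R axis i 1 + h *\<^sub>R axis j 1) - f (y + h *\<^sub>R axis i 1) - f (y + h *\<^sub>R axis j 1) + f y
      = h^2 * pderiv3 (pderiv3 f i) j (y + s *\<^sub>R axis i 1 + t *\<^sub>R axis j 1)"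
proof -
  let ?a = "axis i (1::real)" and ?b = "axis j (1::real)"
  define \<phi> where "\<phi> \<sigma> = f ((y + h *\<^sub>R ?b) + \<sigma> *\<^sub>R ?a) - f (y + \<sigma> *\<^sub>R ?a)" for \<sigma>
  have e1: "(y + h *\<^sub>R ?b) + \<sigma> *\<^sub>R ?a = y + \<sigma> *\<^sub>R ?a + h *\<^sub>R ?b" for \<sigma> by (simp add: algebra_simps)
  have e0: "y + \<sigma> *\<^sub>R ?a = y + \<sigma> *\<^sub>R ?a + 0 *\<^sub>R ?b" for \<sigma> by simp
  have dphi: "(\<phi> has_derivative (\<lambda>d. d * (pderiv3 f i ((y + h *\<^sub>R ?b) + \<sigma> *\<^sub>R ?a) - pderiv3 f i (y + \<sigma> *\<^sub>R ?a)))) (at \<sigma> within {0..h})"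
    if "0 \<le> \<sigma>" "\<sigma> \<le> h" for \<sigma>
  proof -
    have m1: "(y + h *\<^sub>R ?b) + \<sigma> *\<^sub>R ?a \<in> S" unfolding e1 by (rule mem) (use that h in auto)
    have m0: "y + \<sigma> *\<^sub>R ?a \<in> S" using mem[of \<sigma> 0] that h by simp
    have d1: "f differentiable at ((y + h *\<^sub>R ?b) + \<sigma> *\<^sub>R ?a)" by (rule diff_at_of_on[OF fd S m1])
    have d0: "f differentiable at (y + \<sigma> *\<^sub>R ?a)" by (rule diff_at_of_on[OF fd S m0])
    have "(\<phi> has_derivative (\<lambda>d. d * pderiv3 f i ((y + h *\<^sub>R ?b) + \<sigma> *\<^sub>R ?a) - d * pderiv3 f i (y + \<sigma> *\<^sub>R ?a))) (at \<sigma>)"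
      unfolding \<phi>_def[abs_def] by (rule has_derivative_diff[OF line_pd[OF d1] line_pd[OF d0]])
    then show ?thesis by (simp add: right_diff_distrib has_derivative_at_withinI)
  qed
  obtain \<sigma> where \<sigma>: "\<sigma> \<in> {0<..<h}" and
    mv1: "\<phi> h - \<phi> 0 = (h - 0) * (pderiv3 f i ((y + h *\<^sub>R ?b) + \<sigma> *\<^sub>R ?a) - pderiv3 f i (y + \<sigma> *\<^sub>R ?a))"
    using mvt_simple[of 0 h \<phi> "\<lambda>\<sigma> d. d * (pderiv3 f i ((y + h *\<^sub>R ?b) + \<sigma> *\<^sub>R ?a) - pderiv3 f i (y + \<sigma> *\<^sub>R ?a))", OF h dphi] by blast
  define \<psi> where "\<psi> \<tau> = pderiv3 f i ((y + \<sigma> *\<^sub>R ?a) + \<tau> *\<^sub>R ?b)" for \<tau>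
  have e2: "(y + \<sigma> *\<^sub>R ?a) + \<tau> *\<^sub>R ?b = y + \<sigma> *\<^sub>R ?a + \<tau> *\<^sub>R ?b" for \<tau> by simp
  have dpsi: "(\<psi> has_derivative (\<lambda>d. d * pderiv3 (pderiv3 f i) j ((y + \<sigma> *\<^sub>R ?a) + \<tau> *\<^sub>R ?b))) (at \<tau> within {0..h})"
    if "0 \<le> \<tau>" "\<tau> \<le> h" for \<tau>
  proof -
    have m: "(y + \<sigma> *\<^sub>R ?a) + \<tau> *\<^sub>R ?b \<in> S" by (rule mem) (use that \<sigma> in auto)
    have d: "pderiv3 f i differentiable at ((y + \<sigma> *\<^sub>R ?a) + \<tau> *\<^sub>R ?b)" by (rule diff_at_of_on[OF fid S m])
    show ?thesis unfolding \<psi>_def[abs_def] by (rule has_derivative_at_withinI[OF line_pd[OF d]])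
  qed
  obtain \<tau> where \<tau>: "\<tau> \<in> {0<..<h}" and
    mv2: "\<psi> h - \<psi> 0 = (h - 0) * pderiv3 (pderiv3 f i) j ((y + \<sigma> *\<^sub>R ?a) + \<tau> *\<^sub>R ?b)"
    using mvt_simple[of 0 h \<psi> "\<lambda>\<tau> d. d * pderiv3 (pderiv3 f i) j ((y + \<sigma> *\<^sub>R ?a) + \<tau> *\<^sub>R ?b)", OF h dpsi] by blast
  have A: "\<phi> h - \<phi> 0 = f (y + h *\<^sub>R ?a + h *\<^sub>R ?b) - f (y + h *\<^sub>R ?a) - f (y + h *\<^sub>R ?b) + f y"
    unfolding \<phi>_def by (simp add: algebra_simps)
  have B: "pderiv3 f i ((y + h *\<^sub>R ?b) + \<sigma> *\<^sub>R ?a) - pderiv3 f i (y + \<sigma> *\<^sub>R ?a) = \<psi> h - \<psi> 0"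
    unfolding \<psi>_def by (simp add: algebra_simps)
  have C: "\<phi> h - \<phi> 0 = h * (h * pderiv3 (pderiv3 f i) j ((y + \<sigma> *\<^sub>R ?a) + \<tau> *\<^sub>R ?b))"
    using mv1 mv2 B by simp
  have "f (y + h *\<^sub>R ?a + h *\<^sub>R ?b) - f (y + h *\<^sub>R ?a) - f (y + h *\<^sub>R ?b) + f y
     = h^2 * pderiv3 (pderiv3 f i) j (y + \<sigma> *\<^sub>R ?a + \<tau> *\<^sub>R ?b)"
    using A C by (simp add: power2_eq_square)
  then show ?thesis using \<sigma> \<tau> by (intro exI[of _ \<sigma>] exI[of _ \<tau>]) auto
qed

lemma schwarz:
  fixes f :: "real^3 \<Rightarrow> real"
  assumes S: "open S" and y: "y \<in> S" and fd: "f differentiable_on S"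
    and fid: "\<And>i. pderiv3 f i differentiable_on S"
    and cont: "\<And>i j. continuous_on S (pderiv3 (pderiv3 f i) j)"
  shows "pderiv3 (pderiv3 f i) j y = pderiv3 (pderiv3 f j) i y"
proof (rule ccontr)
  let ?D1 = "pderiv3 (pderiv3 f i) j" and ?D2 = "pderiv3 (pderiv3 f j) i"
  assume ne: "?D1 y \<noteq> ?D2 y"
  define e where "e = \<bar>?D1 y - ?D2 y\<bar> / 2"
  have e: "e > 0" using ne unfolding e_def by simp
  have c1: "isCont ?D1 y" using cont[of i j] S y continuous_on_eq_continuous_at by blast
  have c2: "isCont ?D2 y" using cont[of j i] S y continuous_on_eq_continuous_at by blast
  obtain d1 where d1: "d1 > 0" "\<And>z. dist z y < d1 \<Longrightarrow> dist (?D1 z) (?D1 y) < e"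
    using c1 e unfolding continuous_at_eps_delta by blast
  obtain d2 where d2: "d2 > 0" "\<And>z. dist z y < d2 \<Longrightarrow> dist (?D2 z) (?D2 y) < e"
    using c2 e unfolding continuous_at_eps_delta by blast
  obtain r where r: "r > 0" "ball y r \<subseteq> S" using S y open_contains_ball by blast
  define h where "h = min r (min d1 d2) / 3"
  have h: "h > 0" using r d1 d2 unfolding h_def by simp
  have close: "dist (y + s *\<^sub>R axis a 1 + t *\<^sub>R axis b 1) y < min r (min d1 d2)"
    if "0 \<le> s" "s \<le> h" "0 \<le> t" "t \<le> h" for s t and a b :: 3
  proof -
    have "dist (y + s *\<^sub>R axis a 1 + t *\<^sub>R axis b 1) y = norm (s *\<^sub>R axis a (1::real) + t *\<^sub>R axis b 1)"
      by (simp add: dist_norm)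
    also have "\<dots> \<le> norm (s *\<^sub>R axis a (1::real)) + norm (t *\<^sub>R axis b (1::real))" by (rule norm_triangle_ineq)
    also have "\<dots> = s + t" using that by simp
    also have "\<dots> < min r (min d1 d2)" using that h unfolding h_def by simp
    finally show ?thesis .
  qed
  have mem: "y + s *\<^sub>R axis a 1 + t *\<^sub>R axis b 1 \<in> S"
    if "0 \<le> s" "s \<le> h" "0 \<le> t" "t \<le> h" for s t and a b :: 3
    using close[OF that, of a b] r by (auto simp: dist_commute subset_iff)
  obtain s t where st: "0 < s" "s < h" "0 < t" "t < h" and
    m1: "f (y + h *\<^sub>R axis i 1 + h *\<^sub>R axis j 1) - f (y + h *\<^sub>R axis i 1) - f (y + h *\<^sub>R axis j 1) + f y
      = h^2 * ?D1 (y + s *\<^sub>R axis i 1 + t *\<^sub>R axis j 1)"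
    using two_mvt[OF S h mem fd fid, of i j] by blast
  obtain s' t' where st': "0 < s'" "s' < h" "0 < t'" "t' < h" and
    m2: "f (y + h *\<^sub>R axis j 1 + h *\<^sub>R axis i 1) - f (y + h *\<^sub>R axis j 1) - f (y + h *\<^sub>R axis i 1) + f y
      = h^2 * ?D2 (y + s' *\<^sub>R axis j 1 + t' *\<^sub>R axis i 1)"
    using two_mvt[OF S h mem fd fid, of j i] by blast
  have sw: "y + h *\<^sub>R axis j 1 + h *\<^sub>R axis i (1::real) = y + h *\<^sub>R axis i 1 + h *\<^sub>R axis j 1"
    by (simp add: algebra_simps)
  have "h^2 * ?D1 (y + s *\<^sub>R axis i 1 + t *\<^sub>R axis j 1) = h^2 * ?D2 (y + s' *\<^sub>R axis j 1 + t' *\<^sub>R axis i 1)"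
    using m1 m2[unfolded sw] by linarith
  then have eq: "?D1 (y + s *\<^sub>R axis i 1 + t *\<^sub>R axis j 1) = ?D2 (y + s' *\<^sub>R axis j 1 + t' *\<^sub>R axis i 1)"
    using h by simp
  have a1: "dist (?D1 (y + s *\<^sub>R axis i 1 + t *\<^sub>R axis j 1)) (?D1 y) < e"
    using d1(2) close[of s t i j] st by simp
  have a2: "dist (?D2 (y + s' *\<^sub>R axis j 1 + t' *\<^sub>R axis i 1)) (?D2 y) < e"
    using d2(2) close[of s' t' j i] st' by simp
  have "\<bar>?D1 y - ?D2 y\<bar> < 2 * e" using a1 a2 eq unfolding dist_real_def by linarith
  then show False unfolding e_def by simp
qed



lemma euler0:
  fixes f :: "real^3 \<Rightarrow> real"
  assumes fd: "f differentiable at y" and hom: "\<And>t. t > 0 \<Longrightarrow> f (t *\<^sub>R y) = f y"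
  shows "frechet_derivative f (at y) y = 0"
proof -
  let ?F = "frechet_derivative f (at y)"
  have l: "((\<lambda>t::real. y + t *\<^sub>R y) has_derivative (\<lambda>d. d *\<^sub>R y)) (at 0)"
    by (auto intro!: derivative_eq_intros)
  have g: "(f has_derivative ?F) (at (y + 0 *\<^sub>R y))" using pd_deriv[OF fd] by simp
  have c: "((\<lambda>t. f (y + t *\<^sub>R y)) has_derivative (\<lambda>d. ?F (d *\<^sub>R y))) (at 0)"
    using has_derivative_compose[OF l g] by (simp add: o_def)
  have eq: "\<And>t. t \<in> {-1<..} \<Longrightarrow> f (y + t *\<^sub>R y) = f y"
  proof -
    fix t :: real assume "t \<in> {-1<..}"
    then have "1 + t > 0" by simp
    then have "f ((1 + t) *\<^sub>R y) = f y" by (rule hom)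
    then show "f (y + t *\<^sub>R y) = f y" by (simp add: algebra_simps)
  qed
  have c2: "((\<lambda>t::real. f y) has_derivative (\<lambda>d. ?F (d *\<^sub>R y))) (at 0)"
    by (rule has_derivative_transform_within_open[OF c, of "{-1<..}"]) (auto simp: eq)
  have c3: "((\<lambda>t::real. f y) has_derivative (\<lambda>d. 0)) (at 0)" by (rule has_derivative_const)
  have "(\<lambda>d. ?F (d *\<^sub>R y)) = (\<lambda>d. 0)" using has_derivative_unique[OF c2 c3] .
  then have "?F (1 *\<^sub>R y) = 0" by meson
  then show ?thesis by simp
qed

lemma scale_pd:
  fixes f :: "real^3 \<Rightarrow> real"
  assumes S: "open S" "y \<in> S" and hom: "\<And>z. z \<in> S \<Longrightarrow> f (t *\<^sub>R z) = f z"
    and fd: "f differentiable at (t *\<^sub>R y)"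
  shows "pderiv3 f i y = t * pderiv3 f i (t *\<^sub>R y)"
proof -
  let ?F = "frechet_derivative f (at (t *\<^sub>R y))"
  have l: "((\<lambda>z::real^3. t *\<^sub>R z) has_derivative (\<lambda>d. t *\<^sub>R d)) (at y)"
    by (auto intro!: derivative_eq_intros)
  have g: "(f has_derivative ?F) (at (t *\<^sub>R y))" by (rule pd_deriv[OF fd])
  have c: "((\<lambda>z. f (t *\<^sub>R z)) has_derivative (\<lambda>d. ?F (t *\<^sub>R d))) (at y)"
    using has_derivative_compose[OF l g] by (simp add: o_def)
  have c2: "(f has_derivative (\<lambda>d. ?F (t *\<^sub>R d))) (at y)"
    by (rule has_derivative_transform_within_open[OF c S]) (simp add: hom)
  have bl: "bounded_linear ?F" using g by (rule has_derivative_bounded_linear)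
  have "pderiv3 f i y = ?F (t *\<^sub>R axis i 1)" using pd_at[OF c2] .
  also have "\<dots> = t * ?F (axis i 1)" using linear_cmul[OF bounded_linear.linear[OF bl]] by simp
  finally show ?thesis unfolding pderiv3_def .
qed

lemma N_scale:
  fixes y :: "real^3"
  assumes "t > 0" "y \<noteq> 0"
  shows "(1 / norm (t *\<^sub>R y)) *\<^sub>R (t *\<^sub>R y) = (1 / norm y) *\<^sub>R y"
  using assms by simp

lemma norm_N: "(y::real^3) \<noteq> 0 \<Longrightarrow> norm ((1 / norm y) *\<^sub>R y) = 1"
  by simp

lemma N_N: "(y::real^3) \<noteq> 0 \<Longrightarrow> (1 / norm ((1 / norm y) *\<^sub>R y)) *\<^sub>R ((1 / norm y) *\<^sub>R y) = (1 / norm y) *\<^sub>R y"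
  by simp

lemma cone_scale: "y \<in> cone3 U \<Longrightarrow> t > 0 \<Longrightarrow> t *\<^sub>R y \<in> cone3 U"
  unfolding cone3_def using N_scale by auto

lemma cone_nz: "y \<in> cone3 U \<Longrightarrow> y \<noteq> 0"
  unfolding cone3_def by auto

lemma cone_N: "y \<in> cone3 U \<Longrightarrow> (1 / norm y) *\<^sub>R y \<in> U"
  unfolding cone3_def by auto

lemma U_cone: "U \<subseteq> sphere 0 1 \<Longrightarrow> x \<in> U \<Longrightarrow> x \<in> cone3 U"
  unfolding cone3_def by auto

lemma cone_open:
  assumes "openin (top_of_set (sphere 0 1)) U"
  shows "open (cone3 U)"
proof -
  obtain V where V: "open V" "U = sphere 0 1 \<inter> V" using assms by (auto simp: openin_open)
  have c: "continuous_on (- {0}) (\<lambda>y::real^3. (1 / norm y) *\<^sub>R y)"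
    by (intro continuous_intros) auto
  have "cone3 U = (- {0}) \<inter> (\<lambda>y::real^3. (1 / norm y) *\<^sub>R y) -` V"
    unfolding cone3_def V(2) by auto
  then show ?thesis using continuous_open_preimage[OF c _ V(1)] by auto
qed

lemma sph_ext_scale: "(y::real^3) \<noteq> 0 \<Longrightarrow> t > 0 \<Longrightarrow> sph_ext f (t *\<^sub>R y) = sph_ext f y"
  unfolding sph_ext_def using N_scale by simp

lemma sph_ext_N: "(y::real^3) \<noteq> 0 \<Longrightarrow> sph_ext f ((1 / norm y) *\<^sub>R y) = sph_ext f y"
  unfolding sph_ext_def by simp

lemma sph_ext_unit: "norm (x::real^3) = 1 \<Longrightarrow> sph_ext f x = f x"
  unfolding sph_ext_def by simp



lemma mv_inner: "((M::real^3^3) *v u) \<bullet> w = u \<bullet> (transpose M *v w)"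
  by (simp add: inner_vec_def matrix_vector_mult_def transpose_def sum_3 algebra_simps)

lemma sym_mv_inner: "transpose (M::real^3^3) = M \<Longrightarrow> (M *v u) \<bullet> w = u \<bullet> (M *v w)"
  using mv_inner[of M u w] by simp

lemma triple_cross: "cross3 (cross3 x a) w = (x \<bullet> w) *\<^sub>R a - (a \<bullet> w) *\<^sub>R x"
  by (simp add: cross3_simps forall_3)

lemma inner_self_1: "norm (a::real^3) = 1 \<Longrightarrow> a \<bullet> a = 1"
  by (simp add: dot_square_norm)

lemma frame:
  fixes x a z :: "real^3"
  assumes x: "norm x = 1" and a: "norm a = 1" and ax: "a \<bullet> x = 0"
  shows "z = (z \<bullet> a) *\<^sub>R a + (z \<bullet> cross3 x a) *\<^sub>R cross3 x a + (z \<bullet> x) *\<^sub>R x"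
proof -
  define b where "b = cross3 x a"
  have ba: "b \<bullet> a = 0" unfolding b_def by (simp add: dot_cross_self)
  have bx: "b \<bullet> x = 0" unfolding b_def using dot_cross_self(1)[of x a] by (simp add: inner_commute)
  have nb2: "(norm b)\<^sup>2 = 1"
    using norm_cross_dot[of x a] x a ax unfolding b_def by (simp add: inner_commute)
  have nb: "norm b = 1" using nb2 norm_ge_zero[of b] by (simp add: power2_eq_1_iff)
  have aa: "a \<bullet> a = 1" and bb: "b \<bullet> b = 1" and xx: "x \<bullet> x = 1" using inner_self_1 x a nb by auto
  define w where "w = z - ((z \<bullet> a) *\<^sub>R a + (z \<bullet> b) *\<^sub>R b + (z \<bullet> x) *\<^sub>R x)"
  have wa: "a \<bullet> w = 0" unfolding w_def
    by (simp add: inner_diff_right inner_add_right aa inner_commute[of a b] inner_commute[of a z] ba ax)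
  have wb: "b \<bullet> w = 0" unfolding w_def
    by (simp add: inner_diff_right inner_add_right bb ba bx inner_commute[of b z])
  have wx: "x \<bullet> w = 0" unfolding w_def
    by (simp add: inner_diff_right inner_add_right xx inner_commute[of x a] inner_commute[of x b] inner_commute[of x z] ax bx)
  have "cross3 b w = 0" unfolding b_def triple_cross using wx wa by simp
  then have "(norm w)\<^sup>2 = 0" using norm_cross_dot[of b w] wb nb by simp
  then have "w = 0" by simp
  then show ?thesis unfolding w_def b_def by simp
qed

lemma la_key:
  fixes H A :: "real^3^3" and x e :: "real^3"
  assumes x: "norm x = 1" and Hs: "transpose H = H" and Hx: "H *v x = 0"
    and As: "transpose A = A" and tr: "(\<Sum>i\<in>UNIV. \<Sum>k\<in>UNIV. A$i$k * H$k$i) = 0"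
    and ell: "\<And>\<xi>. \<xi> \<bullet> x = 0 \<Longrightarrow> lam * (norm \<xi>)\<^sup>2 \<le> \<xi> \<bullet> (A *v \<xi>) \<and> \<xi> \<bullet> (A *v \<xi>) \<le> Lam * (norm \<xi>)\<^sup>2"
    and lam: "0 < lam" and ex: "e \<bullet> x = 0"
  shows "\<bar>H$k$i\<bar> * norm e \<le> (3 + 2 * Lam / lam) * norm (H *v e)"
proof (cases "e = 0")
  case True then show ?thesis by simp
next
  case False
  define a where "a = (1 / norm e) *\<^sub>R e"
  define b where "b = cross3 x a"
  have na: "norm a = 1" unfolding a_def using False by simp
  have ax: "a \<bullet> x = 0" unfolding a_def using ex by simp
  have ea: "e = norm e *\<^sub>R a" unfolding a_def using False by simp
  have ba: "b \<bullet> a = 0" unfolding b_def by (simp add: dot_cross_self)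
  have bx: "b \<bullet> x = 0" unfolding b_def using dot_cross_self(1)[of x a] by (simp add: inner_commute)
  have nb2: "(norm b)\<^sup>2 = 1"
    using norm_cross_dot[of x a] x na ax unfolding b_def by (simp add: inner_commute)
  have nb: "norm b = 1" using nb2 norm_ge_zero[of b] by (simp add: power2_eq_1_iff)
  have aa: "a \<bullet> a = 1" and bb: "b \<bullet> b = 1" using inner_self_1 na nb by auto
  have fr: "\<And>z. z = (z \<bullet> a) *\<^sub>R a + (z \<bullet> b) *\<^sub>R b + (z \<bullet> x) *\<^sub>R x"
    unfolding b_def by (rule frame[OF x na ax])
  define p where "p = a \<bullet> (H *v a)"
  define q where "q = b \<bullet> (H *v a)"
  define r where "r = b \<bullet> (H *v b)"
  have Hax: "(H *v a) \<bullet> x = 0" using sym_mv_inner[OF Hs, of a x] Hx by simp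
  have Hbx: "(H *v b) \<bullet> x = 0" using sym_mv_inner[OF Hs, of b x] Hx by simp
  have Hba: "(H *v b) \<bullet> a = q" unfolding q_def using sym_mv_inner[OF Hs, of b a] by (simp add: inner_commute)
  have Ha: "H *v a = p *\<^sub>R a + q *\<^sub>R b"
    using fr[of "H *v a"] Hax unfolding p_def q_def by (simp add: inner_commute)
  have Hb: "H *v b = q *\<^sub>R a + r *\<^sub>R b"
    using fr[of "H *v b"] Hbx Hba unfolding r_def by (simp add: inner_commute)
  have Hz: "H *v z = (z \<bullet> a) *\<^sub>R (p *\<^sub>R a + q *\<^sub>R b) + (z \<bullet> b) *\<^sub>R (q *\<^sub>R a + r *\<^sub>R b)" for z
  proof -
    have "H *v z = H *v ((z \<bullet> a) *\<^sub>R a + (z \<bullet> b) *\<^sub>R b + (z \<bullet> x) *\<^sub>R x)" using fr[of z] by simp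
    also have "\<dots> = (z \<bullet> a) *\<^sub>R (H *v a) + (z \<bullet> b) *\<^sub>R (H *v b) + (z \<bullet> x) *\<^sub>R (H *v x)"
      by (simp add: matrix_vector_right_distrib matrix_vector_mult_scaleR)
    finally show ?thesis using Ha Hb Hx by simp
  qed
  have Hent: "H$k$i = a$i * (p * a$k + q * b$k) + b$i * (q * a$k + r * b$k)" for k i
  proof -
    have "H$k$i = (H *v axis i 1) $ k"
      using exhaust_3[of i] by (auto simp: matrix_vector_mult_def axis_def sum_3)
    also have "\<dots> = a$i * (p * a$k + q * b$k) + b$i * (q * a$k + r * b$k)"
      unfolding Hz by (simp add: inner_axis')
    finally show ?thesis .
  qed
  have nHa2: "(norm (H *v a))\<^sup>2 = p\<^sup>2 + q\<^sup>2"
    unfolding power2_norm_eq_inner Ha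
    by (simp add: inner_add_left inner_add_right aa bb ba inner_commute[of a b] power2_eq_square)
  have pb: "\<bar>p\<bar> \<le> norm (H *v a)" using nHa2
    by (metis abs_le_square_iff abs_norm_cancel le_add_same_cancel1 zero_le_power2)
  have qb: "\<bar>q\<bar> \<le> norm (H *v a)" using nHa2
    by (metis abs_le_square_iff abs_norm_cancel le_add_same_cancel2 zero_le_power2)
  have trq: "p * (a \<bullet> (A *v a)) + q * (a \<bullet> (A *v b) + b \<bullet> (A *v a)) + r * (b \<bullet> (A *v b)) = 0"
  proof -
    have "(\<Sum>i\<in>UNIV. \<Sum>k\<in>UNIV. A$i$k * H$k$i) =
       p * (a \<bullet> (A *v a)) + q * (a \<bullet> (A *v b) + b \<bullet> (A *v a)) + r * (b \<bullet> (A *v b))"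
      unfolding Hent by (simp add: sum_3 inner_vec_def matrix_vector_mult_def algebra_simps)
    then show ?thesis using tr by simp
  qed
  have Asym: "u \<bullet> (A *v w) = w \<bullet> (A *v u)" for u w
    using sym_mv_inner[OF As, of w u] by (simp add: inner_commute)
  have eb: "lam \<le> b \<bullet> (A *v b)" using ell[OF bx] nb by simp
  have ea1: "a \<bullet> (A *v a) \<le> Lam" and ea0: "lam \<le> a \<bullet> (A *v a)" using ell[OF ax] na by auto
  have apb: "(a + b) \<bullet> x = 0" and amb: "(a - b) \<bullet> x = 0" using ax bx by (auto simp: inner_add_left inner_diff_left)
  have nab: "(norm (a + b))\<^sup>2 = 2" "(norm (a - b))\<^sup>2 = 2"
    unfolding power2_norm_eq_inner
    by (simp_all add: inner_add_left inner_add_right inner_diff_left inner_diff_right aa bb ba inner_commute[of a b])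
  have exp1: "(a + b) \<bullet> (A *v (a + b)) = a \<bullet> (A *v a) + b \<bullet> (A *v b) + 2 * (a \<bullet> (A *v b))"
    using Asym[of a b] by (simp add: matrix_vector_right_distrib inner_add_left inner_add_right)
  have exp2: "(a - b) \<bullet> (A *v (a - b)) = a \<bullet> (A *v a) + b \<bullet> (A *v b) - 2 * (a \<bullet> (A *v b))"
    using Asym[of a b] by (simp add: matrix_vector_mult_diff_distrib inner_diff_left inner_diff_right)
  have l1: "lam * 2 \<le> (a + b) \<bullet> (A *v (a + b))" "(a + b) \<bullet> (A *v (a + b)) \<le> Lam * 2"
    using ell[OF apb] nab by auto
  have l2: "lam * 2 \<le> (a - b) \<bullet> (A *v (a - b))" "(a - b) \<bullet> (A *v (a - b)) \<le> Lam * 2"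
    using ell[OF amb] nab by auto
  have mixb: "\<bar>a \<bullet> (A *v b) + b \<bullet> (A *v a)\<bar> \<le> Lam"
    using exp1 exp2 l1 l2 Asym[of a b] lam by (simp add: abs_le_iff)
  have aAa: "\<bar>a \<bullet> (A *v a)\<bar> \<le> Lam" using ea1 ea0 lam by simp
  have tri: "\<And>u v w z :: real. \<bar>u * v + w * z\<bar> \<le> \<bar>u\<bar> * \<bar>v\<bar> + \<bar>w\<bar> * \<bar>z\<bar>"
    by (rule order_trans[OF abs_triangle_ineq]) (simp add: abs_mult)
  have "\<bar>r\<bar> * lam \<le> \<bar>r\<bar> * (b \<bullet> (A *v b))" using eb by (simp add: mult_left_mono)
  also have "\<dots> = \<bar>r * (b \<bullet> (A *v b))\<bar>" using eb lam by (simp add: abs_mult)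
  also have "\<dots> = \<bar>p * (a \<bullet> (A *v a)) + q * (a \<bullet> (A *v b) + b \<bullet> (A *v a))\<bar>"
  proof -
    have "r * (b \<bullet> (A *v b)) = - (p * (a \<bullet> (A *v a)) + q * (a \<bullet> (A *v b) + b \<bullet> (A *v a)))"
      using trq by linarith
    then show ?thesis by (simp only: abs_minus_cancel)
  qed
  also have "\<dots> \<le> \<bar>p\<bar> * \<bar>a \<bullet> (A *v a)\<bar> + \<bar>q\<bar> * \<bar>a \<bullet> (A *v b) + b \<bullet> (A *v a)\<bar>"
    by (rule tri)
  also have "\<dots> \<le> norm (H *v a) * Lam + norm (H *v a) * Lam"
    by (intro add_mono mult_mono pb qb aAa mixb) auto
  finally have rb0: "\<bar>r\<bar> * lam \<le> 2 * Lam * norm (H *v a)" by simp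
  have rb: "\<bar>r\<bar> \<le> 2 * Lam / lam * norm (H *v a)"
  proof -
    have "\<bar>r\<bar> = (\<bar>r\<bar> * lam) / lam" using lam by simp
    also have "\<dots> \<le> (2 * Lam * norm (H *v a)) / lam" by (rule divide_right_mono[OF rb0]) (use lam in simp)
    also have "\<dots> = 2 * Lam / lam * norm (H *v a)" by simp
    finally show ?thesis .
  qed
  have c1: "\<bar>a$j\<bar> \<le> 1" "\<bar>b$j\<bar> \<le> 1" for j
    using component_le_norm_cart[of a j] component_le_norm_cart[of b j] na nb by auto
  have "\<bar>H$k$i\<bar> \<le> \<bar>a$i\<bar> * (\<bar>p\<bar> * \<bar>a$k\<bar> + \<bar>q\<bar> * \<bar>b$k\<bar>) + \<bar>b$i\<bar> * (\<bar>q\<bar> * \<bar>a$k\<bar> + \<bar>r\<bar> * \<bar>b$k\<bar>)"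
    unfolding Hent
    by (rule order_trans[OF tri]) (intro add_mono mult_left_mono tri abs_ge_zero)
  also have "\<dots> \<le> 1 * (\<bar>p\<bar> * 1 + \<bar>q\<bar> * 1) + 1 * (\<bar>q\<bar> * 1 + \<bar>r\<bar> * 1)"
    by (intro add_mono mult_mono c1) auto
  also have "\<dots> \<le> (3 + 2 * Lam / lam) * norm (H *v a)"
    using pb qb rb by (simp add: algebra_simps)
  finally have hk: "\<bar>H$k$i\<bar> \<le> (3 + 2 * Lam / lam) * norm (H *v a)" .
  have "norm (H *v e) = norm e * norm (H *v a)"
    by (subst ea) (simp add: matrix_vector_mult_scaleR)
  then show ?thesis using hk mult_right_mono[OF hk norm_ge_zero[of e]] by (simp add: algebra_simps)
qed



lemma fd_expand:
  fixes f :: "real^3 \<Rightarrow> real"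
  assumes "f differentiable at y"
  shows "frechet_derivative f (at y) w = (\<Sum>i\<in>UNIV. w$i * pderiv3 f i y)"
proof -
  let ?F = "frechet_derivative f (at y)"
  have bl: "bounded_linear ?F" using pd_deriv[OF assms] by (rule has_derivative_bounded_linear)
  have lin: "linear ?F" using bl by (rule bounded_linear.linear)
  have w: "w = (\<Sum>i\<in>UNIV. w$i *\<^sub>R axis i (1::real))"
    using basis_expansion[of w] by (simp add: scalar_mult_eq_scaleR)
  have "?F w = ?F (\<Sum>i\<in>UNIV. w$i *\<^sub>R axis i (1::real))" using w by simp
  also have "\<dots> = (\<Sum>i\<in>UNIV. ?F (w$i *\<^sub>R axis i (1::real)))" by (rule linear_sum[OF lin])
  also have "\<dots> = (\<Sum>i\<in>UNIV. w$i * ?F (axis i 1))" using linear_cmul[OF lin] by simp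
  finally show ?thesis unfolding pderiv3_def .
qed

lemma euler_pd:
  fixes f :: "real^3 \<Rightarrow> real"
  assumes "f differentiable at y" "\<And>t. t > 0 \<Longrightarrow> f (t *\<^sub>R y) = f y"
  shows "(\<Sum>i\<in>UNIV. y$i * pderiv3 f i y) = 0"
  using euler0[OF assms] fd_expand[OF assms(1)] by simp

lemma fd_linear:
  fixes f :: "real^3 \<Rightarrow> real"
  assumes "f differentiable at y"
  shows "(\<Sum>i\<in>UNIV. (a *\<^sub>R v + b *\<^sub>R w)$i * pderiv3 f i y)
      = a * (\<Sum>i\<in>UNIV. v$i * pderiv3 f i y) + b * (\<Sum>i\<in>UNIV. w$i * pderiv3 f i y)"
  by (simp add: sum_3 algebra_simps)



lemma Ck3_unfold: "Ck_on 3 f S \<longleftrightarrow> f differentiable_on S \<and> (\<forall>i. pderiv3 f i differentiable_on S \<and>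
   (\<forall>j. pderiv3 (pderiv3 f i) j differentiable_on S \<and> (\<forall>k. continuous_on S (pderiv3 (pderiv3 (pderiv3 f i) j) k))))"
  by (simp add: numeral_3_eq_3)

lemma Ck2_unfold: "Ck_on 2 f S \<longleftrightarrow> f differentiable_on S \<and> (\<forall>i. pderiv3 f i differentiable_on S \<and>
   (\<forall>j. continuous_on S (pderiv3 (pderiv3 f i) j)))"
  by (simp add: numeral_2_eq_2)

lemma Ck3_2: "Ck_on 3 f S \<Longrightarrow> Ck_on 2 (pderiv3 f i) S"
  by (simp add: numeral_3_eq_3 numeral_2_eq_2)

lemma Ck3_to_2: "Ck_on 3 f S \<Longrightarrow> Ck_on 2 f S"
  using Ck_mono[of 2 f S] by (simp add: numeral_3_eq_3 numeral_2_eq_2)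

lemma schwarz2:
  fixes f :: "real^3 \<Rightarrow> real"
  assumes "open S" "Ck_on 2 f S" "y \<in> S"
  shows "pderiv3 (pderiv3 f i) j y = pderiv3 (pderiv3 f j) i y"
  using assms unfolding Ck2_unfold by (intro schwarz[OF assms(1,3)]) auto

lemma diff_sum3:
  fixes f :: "3 \<Rightarrow> real^3 \<Rightarrow> real"
  shows "(\<And>k. f k differentiable at y) \<Longrightarrow> (\<lambda>z. \<Sum>k\<in>UNIV. f k z) differentiable at y"
  by (rule differentiable_sum) auto

context
  fixes U :: "(real^3) set" and A :: "real^3 \<Rightarrow> real^3^3" and u :: "real^3 \<Rightarrow> real"
  assumes US: "U \<subseteq> sphere 0 1" and Uo: "openin (top_of_set (sphere 0 1)) U"
    and Asy: "\<forall>x\<in>U. transpose (A x) = A x \<and> A x *v x = 0"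
    and AC1: "\<forall>i j. sph_Ck 1 (\<lambda>x. A x $ i $ j) U"
    and u3: "sph_Ck 3 u U"
    and ueq: "\<forall>x\<in>U. Fop A u x + u x * trace (A x) = 0"
begin

abbreviation "SS \<equiv> cone3 U"
abbreviation "gg \<equiv> sph_ext u"
abbreviation "vv \<equiv> (\<lambda>y::real^3. norm y * gg y)"
abbreviation "VV k \<equiv> pderiv3 vv k"
abbreviation "AA i k \<equiv> sph_ext (\<lambda>x. A x $ i $ k)"

lemma So: "open SS" by (rule cone_open[OF Uo])
lemma S0: "y \<in> SS \<Longrightarrow> y \<noteq> 0" by (rule cone_nz)
lemma S0': "0 \<notin> SS" using S0 by blast
lemma US': "x \<in> U \<Longrightarrow> x \<in> SS" using U_cone[OF US] .
lemma Un: "x \<in> U \<Longrightarrow> norm x = 1" using US by auto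
lemma SN: "y \<in> SS \<Longrightarrow> (1 / norm y) *\<^sub>R y \<in> SS"
  using cone_scale[of y U "1 / norm y"] S0 by simp

lemma g3: "Ck_on 3 gg SS" using u3 unfolding sph_Ck_def .
lemma v3: "Ck_on 3 vv SS"
  using Ck_mult[OF So conjunct1[OF Ck_norm[OF So S0']] g3] .
lemma v2: "Ck_on 2 vv SS" using Ck3_to_2[OF v3] .
lemma V2: "Ck_on 2 (VV k) SS" using Ck3_2[OF v3] .

lemma gd: "y \<in> SS \<Longrightarrow> gg differentiable at y"
  using g3 diff_at_of_on[OF _ So] unfolding Ck3_unfold by blast
lemma g'd: "y \<in> SS \<Longrightarrow> pderiv3 gg i differentiable at y"
  using g3 diff_at_of_on[OF _ So] unfolding Ck3_unfold by blast
lemma Vd: "y \<in> SS \<Longrightarrow> VV k differentiable at y"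
  using v3 diff_at_of_on[OF _ So] unfolding Ck3_unfold by blast
lemma V'd: "y \<in> SS \<Longrightarrow> pderiv3 (VV k) j differentiable at y"
  using v3 diff_at_of_on[OF _ So] unfolding Ck3_unfold by blast
lemma Ad: "y \<in> SS \<Longrightarrow> AA i k differentiable at y"
proof -
  assume y: "y \<in> SS"
  have "AA i k differentiable_on SS" using AC1 unfolding sph_Ck_def by simp
  then show ?thesis using diff_at_of_on[OF _ So y] by blast
qed

lemma Vform: "y \<in> SS \<Longrightarrow> VV k y = y$k * (1 / norm y) * gg y + norm y * pderiv3 gg k y"
proof -
  assume y: "y \<in> SS"
  have "VV k y = pderiv3 (\<lambda>z. norm z) k y * gg y + norm y * pderiv3 gg k y"
    by (rule pd_mult[OF diff_norm[OF S0[OF y]] gd[OF y]])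
  then show ?thesis using pd_norm[OF S0[OF y]] by simp
qed

lemma gscale: "y \<in> SS \<Longrightarrow> pderiv3 gg k y = (1 / norm y) * pderiv3 gg k ((1 / norm y) *\<^sub>R y)"
proof -
  assume y: "y \<in> SS"
  have hom: "\<And>z. z \<in> SS \<Longrightarrow> gg ((1 / norm y) *\<^sub>R z) = gg z"
    using sph_ext_scale S0 y by simp
  show ?thesis by (rule scale_pd[OF So y hom gd[OF SN[OF y]]])
qed

lemma VX: "y \<in> SS \<Longrightarrow> VV k y = Xu u ((1 / norm y) *\<^sub>R y) $ k"
proof -
  assume y: "y \<in> SS"
  let ?z = "(1 / norm y) *\<^sub>R y"
  have ny: "norm y > 0" using S0[OF y] by simp
  have nz: "norm ?z = 1" using S0[OF y] by simp
  have "Xu u ?z $ k = pderiv3 gg k ?z + u ?z * ?z $ k"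
    unfolding Xu_def sgrad_def grad3_def by simp
  also have "u ?z = gg y" using sph_ext_unit[OF nz, of u] sph_ext_N[OF S0[OF y], of u] by simp
  also have "pderiv3 gg k ?z = norm y * pderiv3 gg k y" using gscale[OF y, of k] ny by simp
  finally have "Xu u ?z $ k = norm y * pderiv3 gg k y + gg y * (y $ k / norm y)" by simp
  then show ?thesis using Vform[OF y, of k] by (simp add: algebra_simps)
qed

lemma Vhom: "y \<in> SS \<Longrightarrow> t > 0 \<Longrightarrow> VV k (t *\<^sub>R y) = VV k y"
proof -
  assume y: "y \<in> SS" and t: "t > 0"
  have ty: "t *\<^sub>R y \<in> SS" by (rule cone_scale[OF y t])
  have "VV k (t *\<^sub>R y) = Xu u ((1 / norm (t *\<^sub>R y)) *\<^sub>R (t *\<^sub>R y)) $ k" by (rule VX[OF ty])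
  also have "\<dots> = Xu u ((1 / norm y) *\<^sub>R y) $ k" by (subst N_scale[OF t S0[OF y]]) (rule refl)
  also have "\<dots> = VV k y" using VX[OF y] by simp
  finally show ?thesis .
qed

lemma phi_ext: "y \<in> SS \<Longrightarrow> sph_ext (phi_E E u) y = (\<Sum>m\<in>UNIV. E$m * VV m y)"
proof -
  assume y: "y \<in> SS"
  have "sph_ext (phi_E E u) y = phi_E E u ((1 / norm y) *\<^sub>R y)" by (simp only: sph_ext_def)
  also have "\<dots> = (\<Sum>m\<in>UNIV. E$m * Xu u ((1 / norm y) *\<^sub>R y) $ m)" by (simp add: phi_E_def inner_vec_def)
  also have "\<dots> = (\<Sum>m\<in>UNIV. E$m * VV m y)" using VX[OF y] by simp
  finally show ?thesis .
qed

lemma rho_ext: "y \<in> SS \<Longrightarrow> sph_ext (rho_u u) y = (\<Sum>m\<in>UNIV. VV m y * VV m y)"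
proof -
  assume y: "y \<in> SS"
  have "sph_ext (rho_u u) y = rho_u u ((1 / norm y) *\<^sub>R y)" by (simp only: sph_ext_def)
  also have "\<dots> = (\<Sum>m\<in>UNIV. Xu u ((1 / norm y) *\<^sub>R y) $ m * Xu u ((1 / norm y) *\<^sub>R y) $ m)"
    by (simp add: rho_u_def power2_norm_eq_inner inner_vec_def)
  also have "\<dots> = (\<Sum>m\<in>UNIV. VV m y * VV m y)" using VX[OF y] by simp
  finally show ?thesis .
qed

lemma dcoord: "(\<lambda>z::real^3. z $ i) differentiable at y"
  by (simp add: bounded_linear_imp_differentiable bounded_linear_vec_nth)

lemma Vdx:
  assumes x: "x \<in> U"
  shows "pderiv3 (VV i) k x = (if k = i then 1 else 0) * gg x - x$i * x$k * gg x
     + x$i * pderiv3 gg k x + x$k * pderiv3 gg i x + pderiv3 (pderiv3 gg i) k x"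
proof -
  have xS: "x \<in> SS" using US'[OF x] .
  have nx: "norm x = 1" using Un[OF x] .
  have x0: "x \<noteq> 0" using nx by auto
  have loc: "pderiv3 (VV i) k x = pderiv3 (\<lambda>z. z$i * (1 / norm z) * gg z + norm z * pderiv3 gg i z) k x"
    by (rule pd_local[OF So xS]) (rule Vform)
  have dc: "(\<lambda>z::real^3. z $ i) differentiable at x" by (rule dcoord)
  have dinv: "(\<lambda>z::real^3. 1 / norm z) differentiable at x" by (rule diff_invnorm[OF x0])
  have dn: "(\<lambda>z::real^3. norm z) differentiable at x" by (rule diff_norm[OF x0])
  have d1: "(\<lambda>z::real^3. z$i * (1 / norm z)) differentiable at x"
    by (rule differentiable_mult[OF dc dinv])
  have d2: "(\<lambda>z::real^3. z$i * (1 / norm z) * gg z) differentiable at x"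
    by (rule differentiable_mult[OF d1 gd[OF xS]])
  have d3: "(\<lambda>z::real^3. norm z * pderiv3 gg i z) differentiable at x"
    by (rule differentiable_mult[OF dn g'd[OF xS]])
  have p1: "pderiv3 (\<lambda>z::real^3. z$i * (1 / norm z)) k x
      = pderiv3 (\<lambda>z::real^3. z $ i) k x * (1 / norm x) + x$i * pderiv3 (\<lambda>z::real^3. 1 / norm z) k x"
    by (rule pd_mult[OF dc dinv])
  have p1': "pderiv3 (\<lambda>z::real^3. z$i * (1 / norm z)) k x = (if k = i then 1 else 0) - x$i * x$k"
    unfolding p1 pd_coord pd_invnorm[OF x0] nx by simp
  have p2: "pderiv3 (\<lambda>z. z$i * (1 / norm z) * gg z) k x
      = pderiv3 (\<lambda>z::real^3. z$i * (1 / norm z)) k x * gg x + x$i * (1 / norm x) * pderiv3 gg k x"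
    by (rule pd_mult[OF d1 gd[OF xS]])
  have p3: "pderiv3 (\<lambda>z. norm z * pderiv3 gg i z) k x
      = pderiv3 (\<lambda>z::real^3. norm z) k x * pderiv3 gg i x + norm x * pderiv3 (pderiv3 gg i) k x"
    by (rule pd_mult[OF dn g'd[OF xS]])
  have p4: "pderiv3 (\<lambda>z. z$i * (1 / norm z) * gg z + norm z * pderiv3 gg i z) k x
      = pderiv3 (\<lambda>z. z$i * (1 / norm z) * gg z) k x + pderiv3 (\<lambda>z. norm z * pderiv3 gg i z) k x"
    by (rule pd_add[OF d2 d3])
  show ?thesis unfolding loc p4 p2 p3 p1' pd_norm[OF x0] nx by (simp add: algebra_simps)
qed

lemma PhiU:
  assumes x: "x \<in> U"
  shows "(\<Sum>i\<in>UNIV. \<Sum>k\<in>UNIV. A x $ i $ k * pderiv3 (VV i) k x) = Fop A u x + u x * trace (A x)"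
proof -
  have nx: "norm x = 1" using Un[OF x] .
  have sym: "A x $ i $ k = A x $ k $ i" for i k
  proof -
    have "transpose (A x) = A x" using Asy x by simp
    then have "transpose (A x) $ i $ k = A x $ i $ k" by simp
    then show ?thesis by (simp add: transpose_def)
  qed
  have row: "(\<Sum>k\<in>UNIV. A x $ i $ k * x $ k) = 0" for i
  proof -
    have "(A x *v x) $ i = 0" using Asy x by simp
    then show ?thesis by (simp add: matrix_vector_mult_def)
  qed
  have col: "(\<Sum>i\<in>UNIV. A x $ i $ k * x $ i) = 0" for k
    using row[of k] by (simp add: sym)
  let ?g = "gg x" and ?dg = "\<lambda>k. pderiv3 gg k x" and ?H = "\<lambda>i k. pderiv3 (pderiv3 gg i) k x"
  have split: "(\<Sum>i\<in>UNIV. \<Sum>k\<in>UNIV. A x $ i $ k * pderiv3 (VV i) k x)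
    = (\<Sum>i\<in>UNIV. \<Sum>k\<in>UNIV. A x $ i $ k * ((if k = i then 1 else 0) * ?g))
    - (\<Sum>i\<in>UNIV. (x$i * ?g) * (\<Sum>k\<in>UNIV. A x $ i $ k * x$k))
    + (\<Sum>k\<in>UNIV. ?dg k * (\<Sum>i\<in>UNIV. A x $ i $ k * x$i))
    + (\<Sum>i\<in>UNIV. ?dg i * (\<Sum>k\<in>UNIV. A x $ i $ k * x$k))
    + (\<Sum>i\<in>UNIV. \<Sum>k\<in>UNIV. A x $ i $ k * ?H i k)"
    unfolding Vdx[OF x] by (simp add: sum_3 algebra_simps)
  have t1: "(\<Sum>i\<in>UNIV. \<Sum>k\<in>UNIV. A x $ i $ k * ((if k = i then 1 else 0) * ?g)) = ?g * trace (A x)"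
    by (simp add: sum_3 trace_def algebra_simps)
  have t5: "(\<Sum>i\<in>UNIV. \<Sum>k\<in>UNIV. A x $ i $ k * ?H i k) = Fop A u x"
    unfolding Fop_def shess_def hess3_def trace_def matrix_matrix_mult_def by simp
  have ux: "u x = gg x" using sph_ext_unit[OF nx] by simp
  show ?thesis unfolding split t1 t5 row col ux by simp
qed

lemma Phi0:
  assumes y: "y \<in> SS"
  shows "(\<Sum>i\<in>UNIV. \<Sum>k\<in>UNIV. AA i k y * pderiv3 (VV i) k y) = 0"
proof -
  let ?z = "(1 / norm y) *\<^sub>R y"
  have zU: "?z \<in> U" using cone_N[OF y] .
  have zS: "?z \<in> SS" using SN[OF y] .
  have ny: "norm y > 0" using S0[OF y] by simp
  have Az: "AA i k y = A ?z $ i $ k" for i k by (simp add: sph_ext_def)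
  have Vz: "pderiv3 (VV i) k y = (1 / norm y) * pderiv3 (VV i) k ?z" for i k
  proof (rule scale_pd[OF So y])
    show "\<And>z. z \<in> SS \<Longrightarrow> VV i ((1 / norm y) *\<^sub>R z) = VV i z" using Vhom ny by simp
    show "VV i differentiable at ?z" by (rule Vd[OF zS])
  qed
  have "(\<Sum>i\<in>UNIV. \<Sum>k\<in>UNIV. AA i k y * pderiv3 (VV i) k y)
     = (1 / norm y) * (\<Sum>i\<in>UNIV. \<Sum>k\<in>UNIV. A ?z $ i $ k * pderiv3 (VV i) k ?z)"
    unfolding Az Vz by (simp add: sum_distrib_left algebra_simps)
  also have "\<dots> = 0" unfolding PhiU[OF zU] using ueq zU by simp
  finally show ?thesis .
qed

lemma DPhi:
  assumes x: "x \<in> U"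
  shows "(\<Sum>i\<in>UNIV. \<Sum>k\<in>UNIV. pderiv3 (AA i k) m x * pderiv3 (VV i) k x
            + A x $ i $ k * pderiv3 (pderiv3 (VV i) k) m x) = 0"
proof -
  have xS: "x \<in> SS" using US'[OF x] .
  have nx: "norm x = 1" using Un[OF x] .
  have dterm: "(\<lambda>z. AA i k z * pderiv3 (VV i) k z) differentiable at x" for i k
    by (rule differentiable_mult[OF Ad[OF xS] V'd[OF xS]])
  have drow: "(\<lambda>z. \<Sum>k\<in>UNIV. AA i k z * pderiv3 (VV i) k z) differentiable at x" for i
    by (rule diff_sum3[OF dterm])
  have "pderiv3 (\<lambda>z. \<Sum>i\<in>UNIV. \<Sum>k\<in>UNIV. AA i k z * pderiv3 (VV i) k z) m x
     = pderiv3 (\<lambda>z. 0) m x"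
    by (rule pd_local[OF So xS]) (rule Phi0)
  also have "\<dots> = 0" by (rule pd_const)
  finally have z: "pderiv3 (\<lambda>z. \<Sum>i\<in>UNIV. \<Sum>k\<in>UNIV. AA i k z * pderiv3 (VV i) k z) m x = 0" .
  have "pderiv3 (\<lambda>z. \<Sum>i\<in>UNIV. \<Sum>k\<in>UNIV. AA i k z * pderiv3 (VV i) k z) m x
     = (\<Sum>i\<in>UNIV. pderiv3 (\<lambda>z. \<Sum>k\<in>UNIV. AA i k z * pderiv3 (VV i) k z) m x)"
    by (rule pd_sum[OF drow])
  also have "\<dots> = (\<Sum>i\<in>UNIV. \<Sum>k\<in>UNIV. pderiv3 (\<lambda>z. AA i k z * pderiv3 (VV i) k z) m x)"
    by (rule sum.cong[OF refl], rule pd_sum[OF dterm])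
  also have "\<dots> = (\<Sum>i\<in>UNIV. \<Sum>k\<in>UNIV. pderiv3 (AA i k) m x * pderiv3 (VV i) k x
            + AA i k x * pderiv3 (pderiv3 (VV i) k) m x)"
    by (rule sum.cong[OF refl], rule sum.cong[OF refl], rule pd_mult[OF Ad[OF xS] V'd[OF xS]])
  also have "\<dots> = (\<Sum>i\<in>UNIV. \<Sum>k\<in>UNIV. pderiv3 (AA i k) m x * pderiv3 (VV i) k x
            + A x $ i $ k * pderiv3 (pderiv3 (VV i) k) m x)"
    using sph_ext_unit[OF nx] by simp
  finally show ?thesis using z by simp
qed

lemma Fop_expand: "Fop A f x = (\<Sum>i\<in>UNIV. \<Sum>k\<in>UNIV. A x $ i $ k * pderiv3 (pderiv3 (sph_ext f) i) k x)"
  unfolding Fop_def shess_def hess3_def trace_def matrix_matrix_mult_def by simp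

lemma Vsym: "y \<in> SS \<Longrightarrow> pderiv3 (VV m) j y = pderiv3 (VV j) m y"
  by (rule schwarz2[OF So v2])

lemma T3: "y \<in> SS \<Longrightarrow> pderiv3 (pderiv3 (VV m) i) k y = pderiv3 (pderiv3 (VV i) k) m y"
proof -
  assume y: "y \<in> SS"
  have "pderiv3 (pderiv3 (VV m) i) k y = pderiv3 (pderiv3 (VV i) m) k y"
    by (rule pd_local[OF So y]) (rule Vsym)
  also have "\<dots> = pderiv3 (pderiv3 (VV i) k) m y" by (rule schwarz2[OF So V2 y])
  finally show ?thesis .
qed

lemma T3sum: "y \<in> SS \<Longrightarrow> (\<Sum>i\<in>UNIV. \<Sum>k\<in>UNIV. c i k * pderiv3 (pderiv3 (VV m) i) k y)
   = (\<Sum>i\<in>UNIV. \<Sum>k\<in>UNIV. c i k * pderiv3 (pderiv3 (VV i) k) m y)"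
proof (rule sum.cong[OF refl], rule sum.cong[OF refl])
  fix i k assume y: "y \<in> SS"
  show "c i k * pderiv3 (pderiv3 (VV m) i) k y = c i k * pderiv3 (pderiv3 (VV i) k) m y"
    using T3[OF y, of m i k] by simp
qed

lemma dphi1: "y \<in> SS \<Longrightarrow> pderiv3 (sph_ext (phi_E E u)) i y = (\<Sum>m\<in>UNIV. E$m * pderiv3 (VV m) i y)"
proof -
  assume y: "y \<in> SS"
  have "pderiv3 (sph_ext (phi_E E u)) i y = pderiv3 (\<lambda>z. \<Sum>m\<in>UNIV. E$m * VV m z) i y"
    by (rule pd_local[OF So y]) (rule phi_ext)
  also have "\<dots> = (\<Sum>m\<in>UNIV. pderiv3 (\<lambda>z. E$m * VV m z) i y)"
    by (rule pd_sum) (rule differentiable_mult[OF differentiable_const Vd[OF y]])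
  also have "\<dots> = (\<Sum>m\<in>UNIV. E$m * pderiv3 (VV m) i y)"
    by (rule sum.cong[OF refl], rule pd_cmult[OF Vd[OF y]])
  finally show ?thesis .
qed

lemma dphi2: "y \<in> SS \<Longrightarrow> pderiv3 (pderiv3 (sph_ext (phi_E E u)) i) k y
    = (\<Sum>m\<in>UNIV. E$m * pderiv3 (pderiv3 (VV m) i) k y)"
proof -
  assume y: "y \<in> SS"
  have "pderiv3 (pderiv3 (sph_ext (phi_E E u)) i) k y = pderiv3 (\<lambda>z. \<Sum>m\<in>UNIV. E$m * pderiv3 (VV m) i z) k y"
    by (rule pd_local[OF So y]) (rule dphi1)
  also have "\<dots> = (\<Sum>m\<in>UNIV. pderiv3 (\<lambda>z. E$m * pderiv3 (VV m) i z) k y)"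
    by (rule pd_sum) (rule differentiable_mult[OF differentiable_const V'd[OF y]])
  also have "\<dots> = (\<Sum>m\<in>UNIV. E$m * pderiv3 (pderiv3 (VV m) i) k y)"
    by (rule sum.cong[OF refl], rule pd_cmult[OF V'd[OF y]])
  finally show ?thesis .
qed

lemma drho1: "y \<in> SS \<Longrightarrow> pderiv3 (sph_ext (rho_u u)) i y
   = (\<Sum>m\<in>UNIV. pderiv3 (VV m) i y * VV m y + VV m y * pderiv3 (VV m) i y)"
proof -
  assume y: "y \<in> SS"
  have "pderiv3 (sph_ext (rho_u u)) i y = pderiv3 (\<lambda>z. \<Sum>m\<in>UNIV. VV m z * VV m z) i y"
    by (rule pd_local[OF So y]) (rule rho_ext)
  also have "\<dots> = (\<Sum>m\<in>UNIV. pderiv3 (\<lambda>z. VV m z * VV m z) i y)"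
    by (rule pd_sum) (rule differentiable_mult[OF Vd[OF y] Vd[OF y]])
  also have "\<dots> = (\<Sum>m\<in>UNIV. pderiv3 (VV m) i y * VV m y + VV m y * pderiv3 (VV m) i y)"
    by (rule sum.cong[OF refl], rule pd_mult[OF Vd[OF y] Vd[OF y]])
  finally show ?thesis .
qed

lemma drho2: "y \<in> SS \<Longrightarrow> pderiv3 (pderiv3 (sph_ext (rho_u u)) i) k y
   = (\<Sum>m\<in>UNIV. (pderiv3 (pderiv3 (VV m) i) k y * VV m y + pderiv3 (VV m) i y * pderiv3 (VV m) k y)
        + (pderiv3 (VV m) k y * pderiv3 (VV m) i y + VV m y * pderiv3 (pderiv3 (VV m) i) k y))"
proof -
  assume y: "y \<in> SS"
  have d1: "(\<lambda>z. pderiv3 (VV m) i z * VV m z) differentiable at y" for m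
    by (rule differentiable_mult[OF V'd[OF y] Vd[OF y]])
  have d2: "(\<lambda>z. VV m z * pderiv3 (VV m) i z) differentiable at y" for m
    by (rule differentiable_mult[OF Vd[OF y] V'd[OF y]])
  have "pderiv3 (pderiv3 (sph_ext (rho_u u)) i) k y
     = pderiv3 (\<lambda>z. \<Sum>m\<in>UNIV. pderiv3 (VV m) i z * VV m z + VV m z * pderiv3 (VV m) i z) k y"
    by (rule pd_local[OF So y]) (rule drho1)
  also have "\<dots> = (\<Sum>m\<in>UNIV. pderiv3 (\<lambda>z. pderiv3 (VV m) i z * VV m z + VV m z * pderiv3 (VV m) i z) k y)"
    by (rule pd_sum) (rule differentiable_add[OF d1 d2])
  also have "\<dots> = (\<Sum>m\<in>UNIV. pderiv3 (\<lambda>z. pderiv3 (VV m) i z * VV m z) k y + pderiv3 (\<lambda>z. VV m z * pderiv3 (VV m) i z) k y)"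
    by (rule sum.cong[OF refl], rule pd_add[OF d1 d2])
  also have "\<dots> = (\<Sum>m\<in>UNIV. (pderiv3 (pderiv3 (VV m) i) k y * VV m y + pderiv3 (VV m) i y * pderiv3 (VV m) k y)
        + (pderiv3 (VV m) k y * pderiv3 (VV m) i y + VV m y * pderiv3 (pderiv3 (VV m) i) k y))"
    by (rule sum.cong[OF refl]) (simp only: pd_mult[OF V'd[OF y] Vd[OF y]] pd_mult[OF Vd[OF y] V'd[OF y]])
  finally show ?thesis .
qed

lemma main_bounds:
  assumes x: "x \<in> U"
    and ell: "\<And>\<xi>. \<xi> \<bullet> x = 0 \<Longrightarrow> lam * (norm \<xi>)\<^sup>2 \<le> \<xi> \<bullet> (A x *v \<xi>) \<and> \<xi> \<bullet> (A x *v \<xi>) \<le> Lam * (norm \<xi>)\<^sup>2"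
    and lam: "0 < lam"
    and Kb: "\<And>i k m. \<bar>pderiv3 (AA i k) m x\<bar> \<le> K"
  shows "Fop A (rho_u u) x \<ge> - (27 * K * (3 + 2 * Lam / lam)) * norm (sgrad (rho_u u) x)
     \<and> Fop A (phi_E E u) x \<ge> - (27 * K * (3 + 2 * Lam / lam)) * norm (sgrad (phi_E E u) x)"
proof -
  define Cst where "Cst = 3 + 2 * Lam / lam"
  have xS: "x \<in> SS" using US'[OF x] .
  have nx: "norm x = 1" using Un[OF x] .
  have xx: "x \<bullet> x = 1" using nx by (simp add: dot_square_norm)
  have K0: "0 \<le> K" using Kb[of 1 1 1] by linarith
  define H where "H = (\<chi> j m. pderiv3 (VV m) j x)"
  have Hent: "H $ j $ m = pderiv3 (VV m) j x" for j m unfolding H_def by simp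
  have Hs: "transpose H = H"
    unfolding vec_eq_iff transpose_def Hent using Vsym[OF xS] by simp
  have Vhx: "\<And>t. t > 0 \<Longrightarrow> VV j (t *\<^sub>R x) = VV j x" for j using Vhom[OF xS] by simp
  have Hx: "H *v x = 0"
  proof -
    have "(H *v x) $ j = 0" for j
    proof -
      have "(H *v x) $ j = (\<Sum>m\<in>UNIV. x$m * pderiv3 (VV j) m x)"
        unfolding matrix_vector_mult_def Hent using Vsym[OF xS] by (simp add: mult.commute)
      also have "\<dots> = 0" by (rule euler_pd[OF Vd[OF xS] Vhx])
      finally show ?thesis .
    qed
    then show ?thesis by (simp add: vec_eq_iff)
  qed
  have As: "transpose (A x) = A x" using Asy x by simp
  have tr: "(\<Sum>i\<in>UNIV. \<Sum>k\<in>UNIV. A x $ i $ k * H $ k $ i) = 0"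
    unfolding Hent PhiU[OF x] using ueq x by simp
  have key: "\<bar>H$k$i\<bar> * norm e \<le> Cst * norm (H *v e)" if "e \<bullet> x = 0" for e k i
    unfolding Cst_def by (rule la_key[OF nx Hs Hx As tr ell lam that])
  define Q where "Q c = (\<Sum>m\<in>UNIV. c$m * (\<Sum>i\<in>UNIV. \<Sum>k\<in>UNIV. pderiv3 (AA i k) m x * H$k$i))" for c
  have Qb: "\<bar>Q c\<bar> \<le> 27 * K * Cst * norm (H *v c)" for c
  proof -
    define e where "e = c - (c \<bullet> x) *\<^sub>R x"
    have ex: "e \<bullet> x = 0" unfolding e_def by (simp add: inner_diff_left xx)
    have He: "H *v e = H *v c" unfolding e_def by (simp add: matrix_vector_mult_diff_distrib matrix_vector_mult_scaleR Hx)
    have ce: "c = 1 *\<^sub>R e + (c \<bullet> x) *\<^sub>R x" unfolding e_def by simp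
    have AE: "(\<Sum>m\<in>UNIV. c$m * pderiv3 (AA i k) m x) = (\<Sum>m\<in>UNIV. e$m * pderiv3 (AA i k) m x)" for i k
    proof -
      have hom: "\<And>t. t > 0 \<Longrightarrow> AA i k (t *\<^sub>R x) = AA i k x" using sph_ext_scale S0[OF xS] by blast
      have z: "(\<Sum>m\<in>UNIV. x$m * pderiv3 (AA i k) m x) = 0" by (rule euler_pd[OF Ad[OF xS] hom])
      have "(\<Sum>m\<in>UNIV. c$m * pderiv3 (AA i k) m x) = (\<Sum>m\<in>UNIV. (1 *\<^sub>R e + (c \<bullet> x) *\<^sub>R x)$m * pderiv3 (AA i k) m x)"
        using ce by simp
      also have "\<dots> = 1 * (\<Sum>m\<in>UNIV. e$m * pderiv3 (AA i k) m x) + (c \<bullet> x) * (\<Sum>m\<in>UNIV. x$m * pderiv3 (AA i k) m x)"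
        by (rule fd_linear[OF Ad[OF xS]])
      finally show ?thesis using z by simp
    qed
    have Qe: "Q c = (\<Sum>i\<in>UNIV. \<Sum>k\<in>UNIV. H$k$i * (\<Sum>m\<in>UNIV. e$m * pderiv3 (AA i k) m x))"
    proof -
      have "Q c = (\<Sum>i\<in>UNIV. \<Sum>k\<in>UNIV. H$k$i * (\<Sum>m\<in>UNIV. c$m * pderiv3 (AA i k) m x))"
        unfolding Q_def by (simp add: sum_3 algebra_simps)
      then show ?thesis using AE by simp
    qed
    have tb: "\<bar>H$k$i * (\<Sum>m\<in>UNIV. e$m * pderiv3 (AA i k) m x)\<bar> \<le> 3 * K * Cst * norm (H *v c)" for i k
    proof -
      have "\<bar>\<Sum>m\<in>UNIV. e$m * pderiv3 (AA i k) m x\<bar> \<le> (\<Sum>m\<in>(UNIV::3 set). \<bar>e$m * pderiv3 (AA i k) m x\<bar>)"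
        by (rule sum_abs)
      also have "\<dots> \<le> (\<Sum>m\<in>(UNIV::3 set). norm e * K)"
      proof (rule sum_mono)
        fix m
        show "\<bar>e$m * pderiv3 (AA i k) m x\<bar> \<le> norm e * K"
          unfolding abs_mult by (rule mult_mono[OF component_le_norm_cart Kb]) auto
      qed
      also have "\<dots> = 3 * K * norm e" by simp
      finally have s: "\<bar>\<Sum>m\<in>UNIV. e$m * pderiv3 (AA i k) m x\<bar> \<le> 3 * K * norm e" .
      have "\<bar>H$k$i * (\<Sum>m\<in>UNIV. e$m * pderiv3 (AA i k) m x)\<bar> \<le> \<bar>H$k$i\<bar> * (3 * K * norm e)"
        unfolding abs_mult by (rule mult_left_mono[OF s]) simp
      also have "\<dots> = 3 * K * (\<bar>H$k$i\<bar> * norm e)" by simp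
      also have "\<dots> \<le> 3 * K * (Cst * norm (H *v e))" using key[OF ex] K0 by (intro mult_left_mono) auto
      finally show ?thesis using He by simp
    qed
    have "\<bar>Q c\<bar> \<le> (\<Sum>i\<in>(UNIV::3 set). \<bar>\<Sum>k\<in>UNIV. H$k$i * (\<Sum>m\<in>UNIV. e$m * pderiv3 (AA i k) m x)\<bar>)"
      unfolding Qe by (rule sum_abs)
    also have "\<dots> \<le> (\<Sum>i\<in>(UNIV::3 set). \<Sum>k\<in>(UNIV::3 set). \<bar>H$k$i * (\<Sum>m\<in>UNIV. e$m * pderiv3 (AA i k) m x)\<bar>)"
      by (rule sum_mono, rule sum_abs)
    also have "\<dots> \<le> (\<Sum>i\<in>(UNIV::3 set). \<Sum>k\<in>(UNIV::3 set). 3 * K * Cst * norm (H *v c))"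
      by (rule sum_mono, rule sum_mono, rule tb)
    also have "\<dots> = 27 * K * Cst * norm (H *v c)" by simp
    finally show ?thesis .
  qed
  have DP: "(\<Sum>i\<in>UNIV. \<Sum>k\<in>UNIV. A x $ i $ k * pderiv3 (pderiv3 (VV i) k) m x)
      = - (\<Sum>i\<in>UNIV. \<Sum>k\<in>UNIV. pderiv3 (AA i k) m x * H$k$i)" for m
    using DPhi[OF x, of m] unfolding Hent by (simp add: sum_3 algebra_simps)
  have Fphi: "Fop A (phi_E E u) x = - Q E"
  proof -
    have "Fop A (phi_E E u) x = (\<Sum>i\<in>UNIV. \<Sum>k\<in>UNIV. A x $ i $ k * (\<Sum>m\<in>UNIV. E$m * pderiv3 (pderiv3 (VV m) i) k x))"
      unfolding Fop_expand dphi2[OF xS] ..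
    also have "\<dots> = (\<Sum>i\<in>UNIV. \<Sum>k\<in>UNIV. A x $ i $ k * (\<Sum>m\<in>UNIV. E$m * pderiv3 (pderiv3 (VV i) k) m x))"
      by (simp add: T3[OF xS])
    also have "\<dots> = (\<Sum>m\<in>UNIV. E$m * (\<Sum>i\<in>UNIV. \<Sum>k\<in>UNIV. A x $ i $ k * pderiv3 (pderiv3 (VV i) k) m x))"
      by (simp add: sum_3 algebra_simps)
    also have "\<dots> = - Q E" unfolding DP Q_def by (simp add: sum_negf)
    finally show ?thesis .
  qed
  have Gphi: "sgrad (phi_E E u) x = H *v E"
    unfolding sgrad_def grad3_def vec_eq_iff matrix_vector_mult_def Hent
    by (simp add: dphi1[OF xS] mult.commute)
  define P where "P = (\<chi> m. VV m x)"
  define col where "col m = (\<chi> i. pderiv3 (VV m) i x)" for m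
  have colx: "col m \<bullet> x = 0" for m
  proof -
    have "col m \<bullet> x = (\<Sum>i\<in>UNIV. x$i * pderiv3 (VV m) i x)"
      unfolding col_def inner_vec_def by (simp add: mult.commute)
    also have "\<dots> = 0" by (rule euler_pd[OF Vd[OF xS] Vhx])
    finally show ?thesis .
  qed
  have S2: "0 \<le> col m \<bullet> (A x *v col m)" for m
  proof -
    have "lam * (norm (col m))\<^sup>2 \<le> col m \<bullet> (A x *v col m)" using ell[OF colx] by simp
    moreover have "0 \<le> lam * (norm (col m))\<^sup>2" using lam by simp
    ultimately show ?thesis by linarith
  qed
  have Frho: "Fop A (rho_u u) x = - 2 * Q P + 2 * (\<Sum>m\<in>UNIV. col m \<bullet> (A x *v col m))"
  proof -
    have "Fop A (rho_u u) x = (\<Sum>i\<in>UNIV. \<Sum>k\<in>UNIV. A x $ i $ k * (\<Sum>m\<in>UNIV.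
        (pderiv3 (pderiv3 (VV m) i) k x * VV m x + pderiv3 (VV m) i x * pderiv3 (VV m) k x)
        + (pderiv3 (VV m) k x * pderiv3 (VV m) i x + VV m x * pderiv3 (pderiv3 (VV m) i) k x)))"
      unfolding Fop_expand drho2[OF xS] ..
    also have "\<dots> = 2 * (\<Sum>m\<in>UNIV. VV m x * (\<Sum>i\<in>UNIV. \<Sum>k\<in>UNIV. A x $ i $ k * pderiv3 (pderiv3 (VV m) i) k x))
        + 2 * (\<Sum>m\<in>UNIV. \<Sum>i\<in>UNIV. pderiv3 (VV m) i x * (\<Sum>k\<in>UNIV. A x $ i $ k * pderiv3 (VV m) k x))"
      by (simp add: sum_3 algebra_simps)
    also have "\<dots> = 2 * (\<Sum>m\<in>UNIV. VV m x * (\<Sum>i\<in>UNIV. \<Sum>k\<in>UNIV. A x $ i $ k * pderiv3 (pderiv3 (VV i) k) m x))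
        + 2 * (\<Sum>m\<in>UNIV. \<Sum>i\<in>UNIV. pderiv3 (VV m) i x * (\<Sum>k\<in>UNIV. A x $ i $ k * pderiv3 (VV m) k x))"
      by (simp only: T3sum[OF xS])
    also have "\<dots> = - 2 * Q P + 2 * (\<Sum>m\<in>UNIV. col m \<bullet> (A x *v col m))"
      unfolding DP Q_def P_def col_def inner_vec_def matrix_vector_mult_def by (simp add: sum_negf)
    finally show ?thesis .
  qed
  have Grho: "sgrad (rho_u u) x = 2 *\<^sub>R (H *v P)"
    unfolding sgrad_def grad3_def vec_eq_iff matrix_vector_mult_def Hent P_def
    by (simp add: drho1[OF xS] sum_distrib_left algebra_simps)
  have r1: "Fop A (rho_u u) x \<ge> - (27 * K * Cst) * norm (sgrad (rho_u u) x)"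
  proof -
    have "0 \<le> (\<Sum>m\<in>UNIV. col m \<bullet> (A x *v col m))" by (rule sum_nonneg) (rule S2)
    moreover have "- Q P \<ge> - (27 * K * Cst * norm (H *v P))" using Qb[of P] by linarith
    ultimately have "Fop A (rho_u u) x \<ge> - 2 * (27 * K * Cst * norm (H *v P))" unfolding Frho by linarith
    moreover have "norm (sgrad (rho_u u) x) = 2 * norm (H *v P)" unfolding Grho by simp
    ultimately show ?thesis by (simp add: algebra_simps)
  qed
  have r2: "Fop A (phi_E E u) x \<ge> - (27 * K * Cst) * norm (sgrad (phi_E E u) x)"
    unfolding Fphi Gphi using Qb[of E] by (simp add: algebra_simps)
  show ?thesis using r1 r2 unfolding Cst_def by simp
qed

end

theorem lemma2:
  fixes lam Lam K :: real
  assumes "0 < lam" and "lam \<le> Lam"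
  shows "\<exists>C1 C2 :: real. \<forall>(U :: (real^3) set) (A :: real^3 \<Rightarrow> real^3^3) (u :: real^3 \<Rightarrow> real).
    (U \<subseteq> sphere 0 1 \<and> openin (top_of_set (sphere 0 1)) U
     \<and> (\<forall>x\<in>U. transpose (A x) = A x \<and> A x *v x = 0)
     \<and> (\<forall>i j. sph_Ck 1 (\<lambda>x. A x $ i $ j) U)
     \<and> (\<forall>x\<in>U. \<forall>\<xi>. \<xi> \<bullet> x = 0 \<longrightarrow>
           lam * (norm \<xi>)\<^sup>2 \<le> \<xi> \<bullet> (A x *v \<xi>) \<and> \<xi> \<bullet> (A x *v \<xi>) \<le> Lam * (norm \<xi>)\<^sup>2)
     \<and> (\<forall>x\<in>U. \<forall>i j. \<bar>A x $ i $ j\<bar> \<le> K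
           \<and> (\<forall>k. \<bar>pderiv3 (sph_ext (\<lambda>y. A y $ i $ j)) k x\<bar> \<le> K))
     \<and> sph_Ck 3 u U
     \<and> (\<forall>x\<in>U. Fop A u x + u x * trace (A x) = 0))
    \<longrightarrow> (\<forall>x\<in>U. \<forall>E :: real^3. norm E = 1 \<longrightarrow>
          Fop A (rho_u u) x \<ge> - C1 * norm (sgrad (rho_u u) x)
        \<and> Fop A (phi_E E u) x \<ge> - C2 * norm (sgrad (phi_E E u) x))"
proof -
  let ?C = "27 * K * (3 + 2 * Lam / lam)"
  show ?thesis
  proof (intro exI[of _ ?C] allI impI ballI)
    fix U :: "(real^3) set" and A :: "real^3 \<Rightarrow> real^3^3" and u :: "real^3 \<Rightarrow> real" and x E :: "real^3"
    assume H: "U \<subseteq> sphere 0 1 \<and> openin (top_of_set (sphere 0 1)) U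
     \<and> (\<forall>x\<in>U. transpose (A x) = A x \<and> A x *v x = 0)
     \<and> (\<forall>i j. sph_Ck 1 (\<lambda>x. A x $ i $ j) U)
     \<and> (\<forall>x\<in>U. \<forall>\<xi>. \<xi> \<bullet> x = 0 \<longrightarrow>
           lam * (norm \<xi>)\<^sup>2 \<le> \<xi> \<bullet> (A x *v \<xi>) \<and> \<xi> \<bullet> (A x *v \<xi>) \<le> Lam * (norm \<xi>)\<^sup>2)
     \<and> (\<forall>x\<in>U. \<forall>i j. \<bar>A x $ i $ j\<bar> \<le> K
           \<and> (\<forall>k. \<bar>pderiv3 (sph_ext (\<lambda>y. A y $ i $ j)) k x\<bar> \<le> K))
     \<and> sph_Ck 3 u U
     \<and> (\<forall>x\<in>U. Fop A u x + u x * trace (A x) = 0)"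
      and x: "x \<in> U" and nE: "norm E = 1"
    from H have US: "U \<subseteq> sphere 0 1" and Uo: "openin (top_of_set (sphere 0 1)) U"
      and Asy: "\<forall>x\<in>U. transpose (A x) = A x \<and> A x *v x = 0"
      and AC1: "\<forall>i j. sph_Ck 1 (\<lambda>x. A x $ i $ j) U"
      and ellA: "\<forall>x\<in>U. \<forall>\<xi>. \<xi> \<bullet> x = 0 \<longrightarrow>
           lam * (norm \<xi>)\<^sup>2 \<le> \<xi> \<bullet> (A x *v \<xi>) \<and> \<xi> \<bullet> (A x *v \<xi>) \<le> Lam * (norm \<xi>)\<^sup>2"
      and KA: "\<forall>x\<in>U. \<forall>i j. \<bar>A x $ i $ j\<bar> \<le> K
           \<and> (\<forall>k. \<bar>pderiv3 (sph_ext (\<lambda>y. A y $ i $ j)) k x\<bar> \<le> K)"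
      and u3: "sph_Ck 3 u U"
      and ueq: "\<forall>x\<in>U. Fop A u x + u x * trace (A x) = 0"
      by blast+
    have ell: "\<And>\<xi>. \<xi> \<bullet> x = 0 \<Longrightarrow> lam * (norm \<xi>)\<^sup>2 \<le> \<xi> \<bullet> (A x *v \<xi>) \<and> \<xi> \<bullet> (A x *v \<xi>) \<le> Lam * (norm \<xi>)\<^sup>2"
      using ellA x by blast
    have Kb: "\<And>i k m. \<bar>pderiv3 (sph_ext (\<lambda>y. A y $ i $ k)) m x\<bar> \<le> K"
      using KA x by blast
    have lam: "0 < lam" using assms(1) .
    show "Fop A (rho_u u) x \<ge> - ?C * norm (sgrad (rho_u u) x)
        \<and> Fop A (phi_E E u) x \<ge> - ?C * norm (sgrad (phi_E E u) x)"
      using main_bounds[OF US Uo Asy AC1 u3 ueq x ell lam Kb, of E] by blast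
  qed
qed

end
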